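(* Let $\alpha>0$. For each $t>0$, the function $\xi\mapsto\rho_\alpha(\|\xi\|,t)$ is a continuous positive definite function on $K$ (with the inductive limit topology), where $\rho_\alpha(s,t)=e^{-ts^\alpha}$ for $s>1$ and $\rho_\alpha(s,t)=1$ for $0\le s\le1$.
   Context: $k$ is a non-Archimedean local field of characteristic $0$; $k=K_1\subset K_2\subset\cdots$ are finite extensions, $K=\bigcup_nK_n$ with the inductive limit topology of the $K_n$; $m_n=[K_n:k]$, $|\cdot|_n$ the normalized absolute value of $K_n$, and $\|x\|=|x|_n^{1/m_n}$ for $x\in K_n$ (well defined on $K$). A function $\phi:K\to\mathbb C$ is positive definite if $\sum_{i,j}c_i\overline{c_j}\phi(\xi_i-\xi_j)\ge0$ for all finite families $\xi_i\in K$, $c_i\in\mathbb C$. *)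

theory Defs
  imports "HOL-Analysis.Analysis"
begin

text \<open>Subfields of an ambient field (the ambient field plays the role of K).\<close>
definition subfield :: "'a::field set \<Rightarrow> bool" where
  "subfield F \<longleftrightarrow> 0 \<in> F \<and> 1 \<in> F \<and>
     (\<forall>x\<in>F. \<forall>y\<in>F. x + y \<in> F \<and> x * y \<in> F) \<and>
     (\<forall>x\<in>F. - x \<in> F \<and> inverse x \<in> F)"

definition nonarch_abs :: "'a::field set \<Rightarrow> ('a \<Rightarrow> real) \<Rightarrow> bool" where
  "nonarch_abs F av \<longleftrightarrow>
     (\<forall>x\<in>F. 0 \<le> av x \<and> (av x = 0 \<longleftrightarrow> x = 0)) \<and>
     (\<forall>x\<in>F. \<forall>y\<in>F. av (x * y) = av x * av y \<and> av (x + y) \<le> max (av x) (av y))"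

definition abs_complete :: "'a::field set \<Rightarrow> ('a \<Rightarrow> real) \<Rightarrow> bool" where
  "abs_complete F av \<longleftrightarrow>
     (\<forall>s::nat \<Rightarrow> 'a. (\<forall>n. s n \<in> F) \<and>
        (\<forall>e>0. \<exists>N. \<forall>i\<ge>N. \<forall>j\<ge>N. av (s i - s j) < e) \<longrightarrow>
        (\<exists>l\<in>F. \<forall>e>0. \<exists>N. \<forall>n\<ge>N. av (s n - l) < e))"

text \<open>Cardinality of the residue field O/P, O = {|x| \<le> 1}, P = {|x| < 1}
  (0 if infinite).\<close>
definition residue_card :: "'a::field set \<Rightarrow> ('a \<Rightarrow> real) \<Rightarrow> nat" where
  "residue_card F av =
     card ((\<lambda>x. {y \<in> F. av y \<le> 1 \<and> av (y - x) < 1}) ` {x \<in> F. av x \<le> 1})"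

text \<open>F with av is a non-Archimedean local field and av is its normalized absolute
  value: F is complete for a discrete non-Archimedean absolute value with finite
  residue field of cardinality q, and the value group is exactly q^Z
  (so a uniformizer has absolute value 1/q).\<close>
definition normalized_local_field :: "'a::field set \<Rightarrow> ('a \<Rightarrow> real) \<Rightarrow> bool" where
  "normalized_local_field F av \<longleftrightarrow>
     subfield F \<and> nonarch_abs F av \<and> abs_complete F av \<and>
     residue_card F av \<ge> 2 \<and>
     av ` (F - {0}) = range (\<lambda>n::int. real (residue_card F av) powi n)"

definition ext_degree :: "'a::field set \<Rightarrow> 'a set \<Rightarrow> nat \<Rightarrow> bool" where
  "ext_degree k F d \<longleftrightarrow> k \<subseteq> F \<and>
     (\<exists>b::nat \<Rightarrow> 'a. (\<forall>i<d. b i \<in> F) \<and>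
        (\<forall>x\<in>F. \<exists>!c::nat \<Rightarrow> 'a. (\<forall>i<d. c i \<in> k) \<and> (\<forall>i\<ge>d. c i = 0) \<and>
                     x = (\<Sum>i<d. c i * b i)))"

definition knorm :: "(nat \<Rightarrow> 'a set) \<Rightarrow> (nat \<Rightarrow> 'a \<Rightarrow> real) \<Rightarrow> (nat \<Rightarrow> nat) \<Rightarrow> 'a \<Rightarrow> real" where
  "knorm K av m x = (let N = (LEAST n. x \<in> K n) in av N x powr (1 / real (m N)))"

definition ind_lim_topology :: "(nat \<Rightarrow> 'a::field set) \<Rightarrow> (nat \<Rightarrow> 'a \<Rightarrow> real) \<Rightarrow> 'a topology" where
  "ind_lim_topology K av = topology (\<lambda>U. \<forall>n. \<forall>x\<in>U \<inter> K n. \<exists>e>0.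
       \<forall>y\<in>K n. av n (y - x) < e \<longrightarrow> y \<in> U)"

definition rho :: "real \<Rightarrow> real \<Rightarrow> real \<Rightarrow> real" where
  "rho \<alpha> s t = (if s > 1 then exp (- t * s powr \<alpha>) else 1)"

definition positive_definite :: "('a::ab_group_add \<Rightarrow> complex) \<Rightarrow> bool" where
  "positive_definite \<phi> \<longleftrightarrow>
     (\<forall>(n::nat) (\<xi>::nat \<Rightarrow> 'a) (c::nat \<Rightarrow> complex).
        let S = (\<Sum>i<n. \<Sum>j<n. c i * cnj (c j) * \<phi> (\<xi> i - \<xi> j)) in
        Im S = 0 \<and> Re S \<ge> 0)"

end

theory Submission
  imports Defs
begin

lemma subfield_facts:
  assumes "subfield F"
  shows "0 \<in> F" "1 \<in> F" "\<And>x y. x \<in> F \<Longrightarrow> y \<in> F \<Longrightarrow> x + y \<in> F"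
    "\<And>x y. x \<in> F \<Longrightarrow> y \<in> F \<Longrightarrow> x * y \<in> F"
    "\<And>x. x \<in> F \<Longrightarrow> - x \<in> F" "\<And>x. x \<in> F \<Longrightarrow> inverse x \<in> F"
  using assms unfolding subfield_def by auto

locale nafield =
  fixes F :: "'a::field set" and av :: "'a \<Rightarrow> real"
  assumes sf: "subfield F" and na: "nonarch_abs F av"
begin

lemma zero[simp,intro]: "0 \<in> F" and one[simp,intro]: "1 \<in> F"
  and add[intro]: "x \<in> F \<Longrightarrow> y \<in> F \<Longrightarrow> x + y \<in> F"
  and mult[intro]: "x \<in> F \<Longrightarrow> y \<in> F \<Longrightarrow> x * y \<in> F"
  and uminus[intro]: "x \<in> F \<Longrightarrow> - x \<in> F"
  and inv[intro]: "x \<in> F \<Longrightarrow> inverse x \<in> F"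
  using subfield_facts[OF sf] by auto

lemma diff[intro]: "x \<in> F \<Longrightarrow> y \<in> F \<Longrightarrow> x - y \<in> F"
  using add[of x "-y"] uminus[of y] by simp
lemma divide[intro]: "x \<in> F \<Longrightarrow> y \<in> F \<Longrightarrow> x / y \<in> F"
  by (simp add: divide_inverse mult inv)
lemma power[intro]: "x \<in> F \<Longrightarrow> x ^ n \<in> F"
  by (induction n) auto
lemma power_int[intro]: "x \<in> F \<Longrightarrow> x powi n \<in> F"
  by (auto simp: power_int_def)
lemma sum[intro]: "(\<And>i. i \<in> I \<Longrightarrow> f i \<in> F) \<Longrightarrow> sum f I \<in> F"
  by (induction I rule: infinite_finite_induct) auto

lemma av_nonneg[simp]: "x \<in> F \<Longrightarrow> 0 \<le> av x"
  using na unfolding nonarch_abs_def by auto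
lemma av_eq0[simp]: "x \<in> F \<Longrightarrow> av x = 0 \<longleftrightarrow> x = 0"
  using na unfolding nonarch_abs_def by auto
lemma av_mult: "x \<in> F \<Longrightarrow> y \<in> F \<Longrightarrow> av (x * y) = av x * av y"
  using na unfolding nonarch_abs_def by auto
lemma av_add: "x \<in> F \<Longrightarrow> y \<in> F \<Longrightarrow> av (x + y) \<le> max (av x) (av y)"
  using na unfolding nonarch_abs_def by auto
lemma av_pos: "x \<in> F \<Longrightarrow> x \<noteq> 0 \<Longrightarrow> 0 < av x"
  using av_nonneg av_eq0 by (metis less_eq_real_def)
lemma av_zero[simp]: "av 0 = 0" by simp
lemma av_one[simp]: "av 1 = 1"
proof -
  have "av 1 = av 1 * av 1" using av_mult[of 1 1] by simp
  moreover have "av 1 \<noteq> 0" by simp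
  ultimately show ?thesis by (metis mult_cancel_left2)
qed
lemma av_minus1: "av (-1) = 1"
proof -
  have "av (-1) * av (-1) = 1" using av_mult[of "-1" "-1"] by auto
  moreover have "av (-1) \<ge> 0" using av_nonneg[OF uminus[OF one]] .
  ultimately show ?thesis by (metis mult_cancel_left1 mult_less_cancel_right2 mult_nonneg_nonneg
     not_less_iff_gr_or_eq mult_le_cancel_right1 mult_le_one  less_eq_real_def)
qed
lemma av_uminus[simp]: "x \<in> F \<Longrightarrow> av (- x) = av x"
  using av_mult[of "-1" x] av_minus1 by auto
lemma av_commute: "x \<in> F \<Longrightarrow> y \<in> F \<Longrightarrow> av (x - y) = av (y - x)"
  using av_uminus[of "x - y"] by (simp add: diff)
lemma av_diff: "x \<in> F \<Longrightarrow> y \<in> F \<Longrightarrow> av (x - y) \<le> max (av x) (av y)"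
  using av_add[of x "-y"] by auto
lemma av_inverse: "x \<in> F \<Longrightarrow> av (inverse x) = inverse (av x)"
proof (cases "x = 0")
  case False
  assume "x \<in> F"
  then have "av x * av (inverse x) = 1" using av_mult[of x "inverse x"] False by auto
  then show ?thesis by (metis inverse_unique)
qed simp
lemma av_divide: "x \<in> F \<Longrightarrow> y \<in> F \<Longrightarrow> av (x / y) = av x / av y"
  by (simp add: divide_inverse av_mult[OF _ inv] av_inverse)
lemma av_power: "x \<in> F \<Longrightarrow> av (x ^ n) = av x ^ n"
  by (induction n) (auto simp: av_mult[OF _ power])
lemma av_strict: assumes "x \<in> F" "y \<in> F" "av y < av x" shows "av (x + y) = av x"
proof -
  have "av (x + y) \<le> av x" using av_add[OF assms(1,2)] assms(3) by simp
  moreover have "av x \<le> max (av (x + y)) (av y)" using av_diff[of "x+y" y] assms by auto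
  ultimately show ?thesis using assms(3) by linarith
qed
lemma av_sum_le: assumes "finite I" "\<And>i. i \<in> I \<Longrightarrow> f i \<in> F" "\<And>i. i \<in> I \<Longrightarrow> av (f i) \<le> B" "0 \<le> B"
  shows "av (sum f I) \<le> B"
  using assms
proof (induction I rule: finite_induct)
  case (insert i I)
  have "av (sum f (insert i I)) = av (f i + sum f I)" using insert by simp
  also have "\<dots> \<le> max (av (f i)) (av (sum f I))" using insert by (intro av_add) auto
  also have "\<dots> \<le> B" using insert by auto
  finally show ?case .
qed simp

end

context nafield begin
lemma av_powi: "x \<in> F \<Longrightarrow> av (x powi n) = av x powi n"
  by (auto simp: power_int_def av_power av_power[OF inv] av_inverse power)
lemma av_le1_mult: "x \<in> F \<Longrightarrow> y \<in> F \<Longrightarrow> av x \<le> 1 \<Longrightarrow> av y \<le> 1 \<Longrightarrow> av (x * y) \<le> 1"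
  by (simp add: av_mult mult_le_one)
end

locale nlf = nafield +
  assumes compl: "abs_complete F av"
    and rc: "residue_card F av \<ge> 2"
    and vg: "av ` (F - {0}) = range (\<lambda>n::int. real (residue_card F av) powi n)"
begin

abbreviation "q \<equiv> real (residue_card F av)"

lemma q_gt1: "q > 1" using rc by simp
lemma q_pos: "q > 0" using rc by simp

lemma value_q: "x \<in> F \<Longrightarrow> x \<noteq> 0 \<Longrightarrow> \<exists>n::int. av x = q powi n"
  using vg by blast

lemma disc: assumes "x \<in> F" "av x < q powi n" shows "av x \<le> q powi (n - 1)"
proof (cases "x = 0")
  case True then show ?thesis using q_pos by simp
next
  case False
  then obtain m where m: "av x = q powi m" using value_q assms by blast
  have "m < n"
  proof (rule ccontr)
    assume "\<not> m < n" then have "q powi n \<le> q powi m" using q_gt1 by (intro power_int_increasing) auto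
    then show False using m assms by simp
  qed
  then show ?thesis using m q_gt1 power_int_increasing[of m "n-1" q] by auto
qed

lemma disc1: assumes "x \<in> F" "av x < 1" shows "av x \<le> q powi (-1)"
proof -
  have "av x < q powi 0" using assms by simp
  from disc[OF assms(1) this] show ?thesis by simp
qed

lemma unif: "\<exists>p\<in>F. av p = q powi (-1)"
proof -
  have "q powi (-1) \<in> av ` (F - {0})" unfolding vg by (rule rangeI)
  then obtain p where "p \<in> F - {0}" "q powi (-1) = av p" by (rule imageE)
  then show ?thesis by auto
qed

definition "upi = (SOME p. p \<in> F \<and> av p = q powi (-1))"
lemma upi: "upi \<in> F" "av upi = q powi (-1)"
  using someI_ex[of "\<lambda>p. p \<in> F \<and> av p = q powi (-1)"] unif unfolding upi_def by auto
lemma upi_nz: "upi \<noteq> 0"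
proof
  assume "upi = 0" then have "av upi = 0" by simp
  moreover have "av upi > 0" using upi(2) q_pos by simp
  ultimately show False by simp
qed
lemma av_upi_pow: "av (upi ^ n) = q powi (- int n)"
  using av_power[OF upi(1)] upi(2) by (simp add: power_int_minus power_inverse)

lemma residue_reps: "\<exists>R. finite R \<and> card R = residue_card F av \<and> R \<subseteq> F \<and> (\<forall>r\<in>R. av r \<le> 1)
   \<and> (\<forall>a\<in>F. av a \<le> 1 \<longrightarrow> (\<exists>r\<in>R. av (a - r) < 1))
   \<and> (\<forall>r\<in>R. \<forall>r'\<in>R. av (r - r') < 1 \<longrightarrow> r = r')"
proof -
  define cl where "cl x = {y \<in> F. av y \<le> 1 \<and> av (y - x) < 1}" for x
  define Ok where "Ok = {x \<in> F. av x \<le> 1}"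
  define C where "C = cl ` Ok"
  have cardC: "card C = residue_card F av" unfolding C_def cl_def Ok_def residue_card_def by (rule refl)
  have "card C \<noteq> 0" using cardC rc by linarith
  then have finC: "finite C" by (meson card.infinite)
  define pick where "pick c = (SOME x. x \<in> Ok \<and> c = cl x)" for c
  have pick0: "pick c \<in> Ok \<and> c = cl (pick c)" if "c \<in> C" for c
  proof -
    have "\<exists>x. x \<in> Ok \<and> c = cl x" using that unfolding C_def by blast
    then show ?thesis unfolding pick_def by (rule someI_ex)
  qed
  have pick: "pick c \<in> Ok" "cl (pick c) = c" if "c \<in> C" for c using pick0[OF that] by auto
  have clx: "x \<in> cl x" if "x \<in> Ok" for x using that unfolding cl_def Ok_def by simp
  have cl_eq: "cl x = cl x'" if xx: "x \<in> Ok" "x' \<in> Ok" "av (x - x') < 1" for x x'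
  proof -
    have xF: "x \<in> F" "x' \<in> F" using xx Ok_def by auto
    have a2: "av (x' - x) < 1" using av_commute[OF xF] xx(3) by simp
    have "av (y - x') < 1 \<longleftrightarrow> av (y - x) < 1" if "y \<in> F" for y
    proof
      assume h: "av (y - x') < 1"
      have "av ((y - x') + (x' - x)) \<le> max (av (y - x')) (av (x' - x))"
        using that xF by (intro av_add diff) auto
      then show "av (y - x) < 1" using h a2 by simp
    next
      assume h: "av (y - x) < 1"
      have "av ((y - x) + (x - x')) \<le> max (av (y - x)) (av (x - x'))"
        using that xF by (intro av_add diff) auto
      then show "av (y - x') < 1" using h xx(3) by simp
    qed
    then show ?thesis unfolding cl_def by blast
  qed
  define R where "R = pick ` C"
  have inj: "inj_on pick C"
  proof (rule inj_onI)
    fix c c' assume "c \<in> C" "c' \<in> C" "pick c = pick c'"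
    then show "c = c'" using pick(2)[of c] pick(2)[of c'] by metis
  qed
  show ?thesis
  proof (intro exI conjI ballI impI)
    show "finite R" using finC R_def by simp
    show "card R = residue_card F av" using card_image[OF inj] cardC R_def by simp
    show "R \<subseteq> F"
    proof
      fix r assume "r \<in> R" then obtain c where "c \<in> C" "r = pick c" unfolding R_def by blast
      then show "r \<in> F" using pick(1)[of c] unfolding Ok_def by blast
    qed
    show "av r \<le> 1" if rR: "r \<in> R" for r
    proof -
      obtain c where "c \<in> C" "r = pick c" using rR unfolding R_def by blast
      then show "av r \<le> 1" using pick(1)[of c] unfolding Ok_def by blast
    qed
    show "\<exists>r\<in>R. av (a - r) < 1" if "a \<in> F" "av a \<le> 1" for a
    proof -
      have a: "a \<in> Ok" using that Ok_def by simp
      then have c: "cl a \<in> C" using C_def by simp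
      then have "a \<in> cl (pick (cl a))" using pick(2)[OF c] clx[OF a] by simp
      then have "av (a - pick (cl a)) < 1" unfolding cl_def by simp
      moreover have "pick (cl a) \<in> R" using c R_def by simp
      ultimately show ?thesis by blast
    qed
    show "r = r'" if rr: "r \<in> R" "r' \<in> R" "av (r - r') < 1" for r r'
    proof -
      obtain c c' where c: "c \<in> C" "c' \<in> C" "r = pick c" "r' = pick c'" using rr(1,2) unfolding R_def by blast
      then have "cl r = cl r'" using cl_eq[of r r'] pick(1)[of c] pick(1)[of c'] rr(3) by blast
      then have "c = c'" using c pick(2) by metis
      then show ?thesis using c by simp
    qed
  qed
qed

end

definition cls :: "'a::field set \<Rightarrow> ('a \<Rightarrow> real) \<Rightarrow> real \<Rightarrow> 'a \<Rightarrow> 'a set" where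
  "cls F av e x = {y \<in> F. av y \<le> 1 \<and> av (y - x) \<le> e}"
definition intg :: "'a::field set \<Rightarrow> ('a \<Rightarrow> real) \<Rightarrow> 'a set" where
  "intg F av = {x \<in> F. av x \<le> 1}"

context nafield begin
lemma cls_eq: assumes "x \<in> F" "x' \<in> F" "0 \<le> e" "av x \<le> 1"
  shows "cls F av e x = cls F av e x' \<longleftrightarrow> av (x - x') \<le> e"
proof
  assume "cls F av e x = cls F av e x'"
  moreover have "x \<in> cls F av e x" using assms unfolding cls_def by auto
  ultimately show "av (x - x') \<le> e" unfolding cls_def by auto
next
  assume h: "av (x - x') \<le> e"
  have "av (y - x') \<le> e \<longleftrightarrow> av (y - x) \<le> e" if "y \<in> F" for y
  proof -
    have h2: "av (x' - x) \<le> e" using av_commute h assms by auto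
    show ?thesis
    proof
      assume h3: "av (y - x') \<le> e"
      have "av ((y - x') + (x' - x)) \<le> max (av (y - x')) (av (x' - x))"
        using that assms by (intro av_add diff) auto
      then show "av (y - x) \<le> e" using h2 h3 by simp
    next
      assume h3: "av (y - x) \<le> e"
      have "av ((y - x) + (x - x')) \<le> max (av (y - x)) (av (x - x'))"
        using that assms by (intro av_add diff) auto
      then show "av (y - x') \<le> e" using h h3 by simp
    qed
  qed
  then show "cls F av e x = cls F av e x'" unfolding cls_def by auto
qed
end

context nlf begin

lemma qp_add: "q powi a * q powi b = q powi (a + b)" using q_pos by (simp add: power_int_add)
lemma qinv_lt1: "inverse q < 1" using q_gt1 by (simp add: inverse_less_1_iff)
lemma qpow_neg_lt1: "n > 0 \<Longrightarrow> q powi (- int n) < 1"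
proof -
  assume "n > 0"
  then have "1 < q ^ n" using q_gt1 by (simp add: one_less_power)
  then show ?thesis by (simp add: power_int_minus inverse_less_1_iff)
qed
lemma qpow_neg_le1: "q powi (- int n) \<le> 1"
proof -
  have "1 \<le> q ^ n" using q_gt1 by (simp add: one_le_power)
  then show ?thesis by (simp add: power_int_minus inverse_le_1_iff)
qed

lemma digit_sum: assumes "\<And>j. j < e \<Longrightarrow> r j \<in> F \<and> av (r j) \<le> 1"
  shows "(\<Sum>j<e. r j * upi ^ j) \<in> F" "av (\<Sum>j<e. r j * upi ^ j) \<le> 1"
proof -
  have t: "r j * upi ^ j \<in> F" "av (r j * upi ^ j) \<le> 1" if "j < e" for j
  proof -
    show "r j * upi ^ j \<in> F" using assms[OF that] upi by auto
    have "1 \<le> q ^ j" using q_gt1 by (simp add: one_le_power)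
    then have "av (upi ^ j) \<le> 1" using av_upi_pow by (simp add: power_int_minus power_int_of_nat inverse_le_1_iff)
    then show "av (r j * upi ^ j) \<le> 1" using assms[OF that] upi(1) av_le1_mult[of "r j" "upi ^ j"] power by auto
  qed
  show "(\<Sum>j<e. r j * upi ^ j) \<in> F" using t by (intro sum) auto
  show "av (\<Sum>j<e. r j * upi ^ j) \<le> 1" using t by (intro av_sum_le) auto
qed

lemma digits_surj: "z \<in> F \<Longrightarrow> av z \<le> 1 \<Longrightarrow> R \<subseteq> F \<Longrightarrow> (\<forall>a\<in>F. av a \<le> 1 \<longrightarrow> (\<exists>r\<in>R. av (a - r) < 1)) \<Longrightarrow>
  \<exists>r \<in> PiE {..<e} (\<lambda>_. R). av (z - (\<Sum>j<e. r j * upi ^ j)) \<le> q powi (- int e)"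
proof (induction e)
  case 0
  then show ?case by (auto intro!: bexI[of _ "\<lambda>_. undefined"])
next
  case (Suc e)
  then obtain r where r: "r \<in> PiE {..<e} (\<lambda>_. R)" and le: "av (z - (\<Sum>j<e. r j * upi ^ j)) \<le> q powi (- int e)"
    by blast
  define w' where "w' = z - (\<Sum>j<e. r j * upi ^ j)"
  have rF: "r j \<in> F" if "j < e" for j using r that Suc.prems by auto
  have w'F: "w' \<in> F" unfolding w'_def using rF Suc.prems upi by (intro diff sum mult power) auto
  define w where "w = w' / upi ^ e"
  have wF: "w \<in> F" unfolding w_def using w'F upi by auto
  have avpe: "av (upi ^ e) = q powi (- int e)" by (rule av_upi_pow)
  have "av w = av w' / q powi (- int e)" unfolding w_def using av_divide[OF w'F power[OF upi(1)]] avpe by simp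
  also have "\<dots> \<le> 1" using le q_pos w'_def by (simp add: divide_le_eq_1)
  finally have w1: "av w \<le> 1" .
  obtain \<rho> where \<rho>: "\<rho> \<in> R" "av (w - \<rho>) < 1" using Suc.prems wF w1 by blast
  have \<rho>F: "\<rho> \<in> F" using \<rho> Suc.prems by auto
  define r' where "r' = r(e := \<rho>)"
  have r': "r' \<in> PiE {..<Suc e} (\<lambda>_. R)"
  proof (rule PiE_I)
    fix j assume j: "j \<in> {..<Suc e}"
    show "r' j \<in> R"
    proof (cases "j = e")
      case True then show ?thesis using \<rho> unfolding r'_def by simp
    next
      case False then have "j \<in> {..<e}" using j by simp
      then show ?thesis using r False PiE_mem[OF r] unfolding r'_def by simp
    qed
  next
    fix j assume j: "j \<notin> {..<Suc e}"
    have j1: "j \<notin> {..<e}" using j by simp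
    have j2: "j \<noteq> e" using j by simp
    have "r j = undefined" using PiE_arb[OF r j1] .
    then show "r' j = undefined" using j2 unfolding r'_def by simp
  qed
  have sum: "(\<Sum>j<Suc e. r' j * upi ^ j) = (\<Sum>j<e. r j * upi ^ j) + \<rho> * upi ^ e"
  proof -
    have "(\<Sum>j<e. r' j * upi ^ j) = (\<Sum>j<e. r j * upi ^ j)"
      by (rule sum.cong) (auto simp: r'_def)
    then show ?thesis by (simp add: r'_def)
  qed
  have pe_nz: "upi ^ e \<noteq> 0" using upi_nz by simp
  have "z - (\<Sum>j<Suc e. r' j * upi ^ j) = upi ^ e * (w - \<rho>)"
    using pe_nz unfolding sum w_def w'_def by (simp add: field_simps)
  then have "av (z - (\<Sum>j<Suc e. r' j * upi ^ j)) = q powi (- int e) * av (w - \<rho>)"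
    using av_mult[OF power[OF upi(1)], of "w - \<rho>" e] wF \<rho>F avpe by auto
  also have "\<dots> \<le> q powi (- int e) * q powi (-1)"
    using disc1[of "w - \<rho>"] wF \<rho>F \<rho> q_pos by (intro mult_left_mono) auto
  also have "\<dots> = q powi (- int (Suc e))" by (subst qp_add) (simp add: algebra_simps)
  finally show ?case using r' by blast
qed

lemma digits_inj: "R \<subseteq> F \<Longrightarrow> (\<forall>r\<in>R. av r \<le> 1) \<Longrightarrow> (\<forall>r\<in>R. \<forall>r'\<in>R. av (r - r') < 1 \<longrightarrow> r = r') \<Longrightarrow>
  (\<forall>j<e. r j \<in> R) \<Longrightarrow> (\<forall>j<e. r' j \<in> R) \<Longrightarrow>
  av ((\<Sum>j<e. r j * upi ^ j) - (\<Sum>j<e. r' j * upi ^ j)) \<le> q powi (- int e) \<Longrightarrow> \<forall>j<e. r j = r' j"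
proof (induction e arbitrary: r r')
  case 0 then show ?case by simp
next
  case (Suc e)
  have rF: "r j \<in> F" "r' j \<in> F" if "j < Suc e" for j using Suc.prems that by auto
  define D where "D = (\<Sum>j<e. r (Suc j) * upi ^ j) - (\<Sum>j<e. r' (Suc j) * upi ^ j)"
  have DF: "D \<in> F" unfolding D_def using rF upi by (intro diff sum mult power) auto
  have split: "(\<Sum>j<Suc e. r j * upi ^ j) - (\<Sum>j<Suc e. r' j * upi ^ j) = (r 0 - r' 0) + upi * D"
    unfolding D_def sum.lessThan_Suc_shift by (simp add: algebra_simps sum_distrib_left)
  have r0F: "r 0 - r' 0 \<in> F" using rF by auto
  have ds: "(\<Sum>j<e. r (Suc j) * upi ^ j) \<in> F" "av (\<Sum>j<e. r (Suc j) * upi ^ j) \<le> 1"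
    "(\<Sum>j<e. r' (Suc j) * upi ^ j) \<in> F" "av (\<Sum>j<e. r' (Suc j) * upi ^ j) \<le> 1"
  proof -
    have h1: "r (Suc j) \<in> F \<and> av (r (Suc j)) \<le> 1" "r' (Suc j) \<in> F \<and> av (r' (Suc j)) \<le> 1" if "j < e" for j
      using Suc.prems that by auto
    show "(\<Sum>j<e. r (Suc j) * upi ^ j) \<in> F" "av (\<Sum>j<e. r (Suc j) * upi ^ j) \<le> 1"
      using digit_sum[of e "\<lambda>j. r (Suc j)"] h1(1) by blast+
    show "(\<Sum>j<e. r' (Suc j) * upi ^ j) \<in> F" "av (\<Sum>j<e. r' (Suc j) * upi ^ j) \<le> 1"
      using digit_sum[of e "\<lambda>j. r' (Suc j)"] h1(2) by blast+
  qed
  have avD1: "av D \<le> 1"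
  proof -
    have "av D \<le> max (av (\<Sum>j<e. r (Suc j) * upi ^ j)) (av (\<Sum>j<e. r' (Suc j) * upi ^ j))"
      unfolding D_def by (rule av_diff[OF ds(1,3)])
    then show ?thesis using ds(2,4) by linarith
  qed
  have R0: "r 0 \<in> R" "r' 0 \<in> R" using Suc.prems(4,5) by auto
  have R01: "av (r 0) \<le> 1" "av (r' 0) \<le> 1" using R0 Suc.prems(2) by auto
  have qm1: "q powi (-1) < 1" using qinv_lt1 by simp
  have avpD: "av (upi * D) = q powi (-1) * av D" using av_mult[OF upi(1) DF] upi(2) by simp
  have "av (r 0 - r' 0) < 1"
  proof (rule ccontr)
    assume "\<not> av (r 0 - r' 0) < 1"
    moreover have "av (r 0 - r' 0) \<le> max (av (r 0)) (av (r' 0))" using av_diff rF by simp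
    ultimately have a1: "av (r 0 - r' 0) = 1" using R01 by linarith
    have "q powi (-1) * av D \<le> q powi (-1) * 1" using avD1 q_pos by (intro mult_left_mono) auto
    then have "av (upi * D) < 1" using avpD qm1 by linarith
    then have "av ((r 0 - r' 0) + upi * D) = 1" using av_strict[OF r0F, of "upi * D"] a1 upi DF by auto
    moreover have "q powi (- int (Suc e)) < 1" by (rule qpow_neg_lt1) simp
    ultimately show False using Suc.prems(6) split by simp
  qed
  then have r0: "r 0 = r' 0" using Suc.prems(3,4,5) by auto
  have "q powi (-1) * av D \<le> q powi (-1) * q powi (- int e)"
  proof -
    have "q powi (-1) * av D = av (upi * D)" using av_mult[OF upi(1) DF] upi(2) by simp
    also have "\<dots> \<le> q powi (- int (Suc e))" using Suc.prems(6) split r0 by simp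
    also have "\<dots> = q powi (-1) * q powi (- int e)" by (subst qp_add) (simp add: algebra_simps)
    finally show ?thesis .
  qed
  moreover have "0 < q powi (-1)" using q_pos by simp
  ultimately have "av D \<le> q powi (- int e)" by (rule mult_left_le_imp_le)
  moreover have "\<forall>j<e. r (Suc j) \<in> R" "\<forall>j<e. r' (Suc j) \<in> R" using Suc.prems(4,5) by auto
  ultimately have "\<forall>j<e. r (Suc j) = r' (Suc j)" using Suc.IH[of "\<lambda>j. r (Suc j)" "\<lambda>j. r' (Suc j)"] Suc.prems(1,2,3)
    unfolding D_def by blast
  then show ?case using r0 by (metis less_Suc_eq_0_disj)
qed


lemma count_digits: "card (cls F av (q powi (- int e)) ` intg F av) = residue_card F av ^ e"
proof -
  obtain R where R: "finite R" "card R = residue_card F av" "R \<subseteq> F" "\<forall>r\<in>R. av r \<le> 1"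
    "\<forall>a\<in>F. av a \<le> 1 \<longrightarrow> (\<exists>r\<in>R. av (a - r) < 1)" "\<forall>r\<in>R. \<forall>r'\<in>R. av (r - r') < 1 \<longrightarrow> r = r'"
    using residue_reps by (elim exE conjE) (rule that)
  define \<epsilon> where "\<epsilon> = q powi (- int e)"
  have \<epsilon>0: "0 \<le> \<epsilon>" unfolding \<epsilon>_def using q_pos by simp
  define \<phi> where "\<phi> r = cls F av \<epsilon> (\<Sum>j<e. r j * upi ^ j)" for r
  define P where "P = PiE {..<e} (\<lambda>_. R)"
  have rin: "r j \<in> F \<and> av (r j) \<le> 1" if "r \<in> P" "j < e" for r j
    using that R(3,4) unfolding P_def by (auto simp: PiE_mem)
  have ds: "(\<Sum>j<e. r j * upi ^ j) \<in> F" "av (\<Sum>j<e. r j * upi ^ j) \<le> 1" if "r \<in> P" for r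
    using digit_sum[of e r] rin[OF that] by blast+
  have "bij_betw \<phi> P (cls F av \<epsilon> ` intg F av)"
  proof (rule bij_betw_imageI)
    show "inj_on \<phi> P"
    proof (rule inj_onI)
      fix r r' assume rr: "r \<in> P" "r' \<in> P" "\<phi> r = \<phi> r'"
      then have "av ((\<Sum>j<e. r j * upi ^ j) - (\<Sum>j<e. r' j * upi ^ j)) \<le> \<epsilon>"
        using cls_eq[OF ds(1)[OF rr(1)] ds(1)[OF rr(2)] \<epsilon>0 ds(2)[OF rr(1)]] unfolding \<phi>_def by simp
      moreover have "\<forall>j<e. r j \<in> R" "\<forall>j<e. r' j \<in> R" using rr(1,2) unfolding P_def by (auto simp: PiE_mem)
      ultimately have "\<forall>j<e. r j = r' j" using digits_inj[of R e r r'] R(3,4,6) unfolding \<epsilon>_def by blast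
      then show "r = r'" using rr(1,2) unfolding P_def by (intro PiE_ext[of r "{..<e}" "\<lambda>_. R" r']) auto
    qed
    show "\<phi> ` P = cls F av \<epsilon> ` intg F av"
    proof
      show "\<phi> ` P \<subseteq> cls F av \<epsilon> ` intg F av"
        using ds unfolding \<phi>_def intg_def by blast
      show "cls F av \<epsilon> ` intg F av \<subseteq> \<phi> ` P"
      proof
        fix C assume "C \<in> cls F av \<epsilon> ` intg F av"
        then obtain z where z: "z \<in> F" "av z \<le> 1" "C = cls F av \<epsilon> z" unfolding intg_def by blast
        obtain r where r: "r \<in> P" "av (z - (\<Sum>j<e. r j * upi ^ j)) \<le> \<epsilon>"
          using digits_surj[OF z(1,2) R(3,5)] unfolding P_def \<epsilon>_def by blast
        have "cls F av \<epsilon> z = \<phi> r" unfolding \<phi>_def using cls_eq[OF z(1) ds(1)[OF r(1)] \<epsilon>0 z(2)] r(2) by simp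
        then show "C \<in> \<phi> ` P" using z(3) r(1) by blast
      qed
    qed
  qed
  then have "card (cls F av \<epsilon> ` intg F av) = card P" by (simp add: bij_betw_same_card)
  also have "\<dots> = residue_card F av ^ e" unfolding P_def by (simp add: card_PiE R(2))
  finally show ?thesis unfolding \<epsilon>_def .
qed

end

lemma nonarch_abs_subset: "nonarch_abs L av \<Longrightarrow> k \<subseteq> L \<Longrightarrow> nonarch_abs k av"
proof -
  assume a: "nonarch_abs L av" "k \<subseteq> L"
  show ?thesis unfolding nonarch_abs_def
  proof (intro conjI ballI)
    fix x assume "x \<in> k" then have "x \<in> L" using a(2) by auto
    then show "0 \<le> av x" "(av x = 0) = (x = 0)" using a(1) unfolding nonarch_abs_def by auto
  next
    fix x y assume "x \<in> k" "y \<in> k" then have "x \<in> L" "y \<in> L" using a(2) by auto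
    then show "av (x * y) = av x * av y" "av (x + y) \<le> max (av x) (av y)" using a(1) unfolding nonarch_abs_def by auto
  qed
qed

context nlf begin

lemma powi_as_powr: "q powi n = q powr (real_of_int n)"
  using q_pos by (simp add: powr_real_of_int')

lemma equiv_abs:
  assumes na2: "nonarch_abs F av2" and same: "\<And>x. x \<in> F \<Longrightarrow> (av2 x < 1 \<longleftrightarrow> av x < 1)"
  shows "\<exists>c>0. \<forall>x\<in>F. av2 x = av x powr c"
proof -
  interpret N2: nafield F av2 using sf na2 by unfold_locales
  have a1: "av upi < 1" using upi(2) qinv_lt1 by simp
  then have b1: "av2 upi < 1" using same upi(1) by simp
  have b0: "av2 upi > 0" using N2.av_pos upi_nz upi(1) by simp
  define c where "c = - log q (av2 upi)"
  have "log q (av2 upi) < 0" using b0 b1 q_gt1 by simp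
  then have cpos: "c > 0" unfolding c_def by simp
  have avu: "av2 upi = q powr (- c)" unfolding c_def using b0 q_gt1 by simp
  have main: "av2 x = av x powr c" if x: "x \<in> F" for x
  proof (cases "x = 0")
    case True then show ?thesis by simp
  next
    case False
    then obtain n where n: "av x = q powi n" using value_q x by blast
    define u where "u = x * upi powi n"
    have uF: "u \<in> F" unfolding u_def using x upi by auto
    have "av u = q powi n * (q powi (-1)) powi n" unfolding u_def using av_mult[OF x power_int[OF upi(1)]] n
      av_powi[OF upi(1)] upi(2) by simp
    also have "\<dots> = 1" using q_pos by (simp add: power_int_minus_left power_int_mult_distrib[symmetric] power_int_inverse)
    finally have au: "av u = 1" .
    have unz: "u \<noteq> 0" using au uF by auto
    have "\<not> av2 u < 1" using same[OF uF] au by simp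
    moreover have "\<not> av2 (inverse u) < 1" using same[OF inv[OF uF]] au av_inverse[OF uF] by simp
    moreover have "av2 u > 0" using N2.av_pos[OF uF unz] .
    ultimately have au2: "av2 u = 1" using N2.av_inverse[OF uF]
      by (metis inverse_less_1_iff linorder_neqE_linordered_idom not_less_iff_gr_or_eq)
    have xu: "x = u * upi powi (- n)" unfolding u_def using upi_nz by (simp add: power_int_minus field_simps)
    have "av2 x = av2 upi powi (- n)" using xu N2.av_mult[OF uF N2.power_int[OF upi(1)]] au2 N2.av_powi[OF upi(1)] by simp
    also have "\<dots> = (q powr (- c)) powr (real_of_int (- n))"
      using avu powr_real_of_int'[of "q powr (- c)" "- n"] q_pos by simp
    also have "\<dots> = q powr (c * real_of_int n)" by (simp add: powr_powr)
    also have "\<dots> = av x powr c" using n powi_as_powr by (simp add: powr_powr mult.commute)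
    finally show ?thesis .
  qed
  show ?thesis using cpos main by blast
qed

end


definition lin_indep :: "'a::field set \<Rightarrow> 'b set \<Rightarrow> ('b \<Rightarrow> 'a) \<Rightarrow> bool" where
  "lin_indep k J u \<longleftrightarrow> (\<forall>g. (\<forall>j\<in>J. g j \<in> k) \<and> (\<Sum>j\<in>J. g j * u j) = 0 \<longrightarrow> (\<forall>j\<in>J. g j = 0))"
definition in_span :: "'a::field set \<Rightarrow> 'b set \<Rightarrow> ('b \<Rightarrow> 'a) \<Rightarrow> 'a \<Rightarrow> bool" where
  "in_span k I w z \<longleftrightarrow> (\<exists>a. (\<forall>i\<in>I. a i \<in> k) \<and> z = (\<Sum>i\<in>I. a i * w i))"

lemma steinitz:
  fixes k :: "'a::field set" and u w :: "'b \<Rightarrow> 'a" and I J :: "'b set"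
  assumes sk: "subfield k" and fI: "finite I"
  shows "finite J \<Longrightarrow> lin_indep k J u \<Longrightarrow> (\<forall>j\<in>J. in_span k I w (u j)) \<Longrightarrow> card J \<le> card I"
  using fI
proof (induction I arbitrary: J u rule: finite_induct)
  case empty
  have u0: "u j = 0" if "j \<in> J" for j using empty.prems(3) that unfolding in_span_def by auto
  have "J = {}"
  proof (rule ccontr)
    assume "J \<noteq> {}" then obtain j0 where j0: "j0 \<in> J" by blast
    define g where "g j = (if j = j0 then 1 else (0::'a))" for j
    have "\<forall>j\<in>J. g j \<in> k" using subfield_facts(1,2)[OF sk] unfolding g_def by auto
    moreover have "(\<Sum>j\<in>J. g j * u j) = 0" using u0 by simp
    ultimately have "g j0 = 0" using empty.prems(2) j0 unfolding lin_indep_def by blast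
    then show False unfolding g_def by simp
  qed
  then show ?case by simp
next
  case (insert i0 I)
  have kF: "0 \<in> k" "1 \<in> k" "\<And>x y. x \<in> k \<Longrightarrow> y \<in> k \<Longrightarrow> x + y \<in> k" "\<And>x y. x \<in> k \<Longrightarrow> y \<in> k \<Longrightarrow> x * y \<in> k"
    "\<And>x. x \<in> k \<Longrightarrow> - x \<in> k" "\<And>x. x \<in> k \<Longrightarrow> inverse x \<in> k" using subfield_facts[OF sk] by auto
  have kdiff: "x - y \<in> k" if "x \<in> k" "y \<in> k" for x y using kF(3)[OF that(1) kF(5)[OF that(2)]] by simp
  have kdiv: "x / y \<in> k" if "x \<in> k" "y \<in> k" for x y using kF(4)[OF that(1) kF(6)[OF that(2)]] by (simp add: divide_inverse)
  have ksum: "sum f S \<in> k" if "\<And>s. s \<in> S \<Longrightarrow> f s \<in> k" for f and S :: "'b set"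
    using that by (induction S rule: infinite_finite_induct) (auto intro: kF)
  have "\<forall>j\<in>J. \<exists>a. (\<forall>i\<in>insert i0 I. a i \<in> k) \<and> u j = (\<Sum>i\<in>insert i0 I. a i * w i)"
    using insert.prems(3) unfolding in_span_def by blast
  then obtain A where A: "\<And>j. j \<in> J \<Longrightarrow> (\<forall>i\<in>insert i0 I. A j i \<in> k) \<and> u j = (\<Sum>i\<in>insert i0 I. A j i * w i)"
    by metis
  have Ak: "A j i \<in> k" if "j \<in> J" "i \<in> insert i0 I" for j i using A that by blast
  have uA: "u j = A j i0 * w i0 + (\<Sum>i\<in>I. A j i * w i)" if "j \<in> J" for j
    using A[OF that] insert.hyps by simp
  show ?case
  proof (cases "\<forall>j\<in>J. A j i0 = 0")
    case True
    have "\<forall>j\<in>J. in_span k I w (u j)"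
    proof
      fix j assume j: "j \<in> J"
      have "u j = (\<Sum>i\<in>I. A j i * w i)" using uA[OF j] True j by simp
      then show "in_span k I w (u j)" unfolding in_span_def using Ak j by blast
    qed
    then have "card J \<le> card I" using insert.IH insert.prems(1,2) by blast
    then show ?thesis using insert.hyps by simp
  next
    case False
    then obtain j0 where j0: "j0 \<in> J" "A j0 i0 \<noteq> 0" by blast
    define t where "t j = A j i0 / A j0 i0" for j
    have tk: "t j \<in> k" if "j \<in> J" for j unfolding t_def using Ak that j0 by (intro kdiv) auto
    define u' where "u' j = u j - t j * u j0" for j
    define J' where "J' = J - {j0}"
    have spanI: "in_span k I w (u' j)" if j: "j \<in> J'" for j
    proof -
      have jJ: "j \<in> J" using j J'_def by simp
      have tt: "t j * A j0 i0 = A j i0" unfolding t_def using j0 by simp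
      have s1: "(\<Sum>i\<in>I. (A j i - t j * A j0 i) * w i) = (\<Sum>i\<in>I. A j i * w i) - t j * (\<Sum>i\<in>I. A j0 i * w i)"
        by (simp only: left_diff_distrib sum_subtractf sum_distrib_left mult.assoc)
      have "u' j = (A j i0 - t j * A j0 i0) * w i0 + (\<Sum>i\<in>I. (A j i - t j * A j0 i) * w i)"
        unfolding u'_def uA[OF jJ] uA[OF j0(1)] s1 by (simp only: algebra_simps)
      also have "\<dots> = (\<Sum>i\<in>I. (A j i - t j * A j0 i) * w i)" by (simp only: tt diff_self mult_zero_left add_0)
      finally have ueq: "u' j = (\<Sum>i\<in>I. (A j i - t j * A j0 i) * w i)" .
      have cin: "\<forall>i\<in>I. A j i - t j * A j0 i \<in> k"
      proof
        fix i assume "i \<in> I"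
        then have "A j i \<in> k" "A j0 i \<in> k" using Ak jJ j0(1) by auto
        then show "A j i - t j * A j0 i \<in> k" using tk[OF jJ] kdiff kF(4) by simp
      qed
      show ?thesis unfolding in_span_def by (rule exI[of _ "\<lambda>i. A j i - t j * A j0 i"]) (use ueq cin in simp)
    qed
    have indep': "lin_indep k J' u'"
      unfolding lin_indep_def
    proof (intro allI impI)
      fix g assume g: "(\<forall>j\<in>J'. g j \<in> k) \<and> (\<Sum>j\<in>J'. g j * u' j) = 0"
      define g' where "g' j = (if j = j0 then - (\<Sum>j\<in>J'. g j * t j) else g j)" for j
      have g'k: "\<forall>j\<in>J. g' j \<in> k"
        unfolding g'_def using g tk J'_def by (auto intro!: kF(5) ksum kF(4))
      have fJ: "finite J" by (rule insert.prems(1))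
      have "(\<Sum>j\<in>J. g' j * u j) = g' j0 * u j0 + (\<Sum>j\<in>J'. g' j * u j)"
        unfolding J'_def using fJ j0(1) by (simp add: sum.remove)
      also have "(\<Sum>j\<in>J'. g' j * u j) = (\<Sum>j\<in>J'. g j * u j)"
        unfolding g'_def J'_def by (rule sum.cong) auto
      also have "g' j0 = - (\<Sum>j\<in>J'. g j * t j)" unfolding g'_def by simp
      also have "(\<Sum>j\<in>J'. g j * u j) = (\<Sum>j\<in>J'. g j * u' j) + (\<Sum>j\<in>J'. g j * t j) * u j0"
      proof -
        have "(\<Sum>j\<in>J'. g j * u' j) = (\<Sum>j\<in>J'. g j * u j - (g j * t j) * u j0)"
          unfolding u'_def by (simp only: right_diff_distrib mult.assoc)
        also have "\<dots> = (\<Sum>j\<in>J'. g j * u j) - (\<Sum>j\<in>J'. g j * t j) * u j0"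
          by (simp only: sum_subtractf sum_distrib_right)
        finally show ?thesis by simp
      qed
      finally have "(\<Sum>j\<in>J. g' j * u j) = 0" using g by simp
      then have g0: "\<forall>j\<in>J. g' j = 0" using insert.prems(2) g'k unfolding lin_indep_def by blast
      show "\<forall>j\<in>J'. g j = 0"
      proof
        fix j assume "j \<in> J'"
        then have jj: "j \<in> J" "j \<noteq> j0" by (auto simp: J'_def)
        then have "g' j = 0" using g0 by blast
        then show "g j = 0" using jj(2) unfolding g'_def by simp
      qed
    qed
    have "card J' \<le> card I" using insert.IH[of J' u'] indep' spanI insert.prems(1) J'_def by blast
    moreover have "card J = Suc (card J')" unfolding J'_def using card_Suc_Diff1[OF insert.prems(1) j0(1)] by simp
    ultimately show ?thesis using insert.hyps by simp
  qed
qed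

lemma ex1_eq: "\<exists>!x. P x \<Longrightarrow> P a \<Longrightarrow> P b \<Longrightarrow> a = b" by blast

locale locext = K: nlf k avk + L: nlf L avL for k :: "'a::field set" and avk and L :: "'a set" and avL +
  fixes d :: nat
  assumes deg: "ext_degree k L d"
    and compat: "\<And>x. x \<in> k \<Longrightarrow> (avL x < 1 \<longleftrightarrow> avk x < 1)"
begin

lemma sub: "k \<subseteq> L" using deg unfolding ext_degree_def by simp
lemma inL: "x \<in> k \<Longrightarrow> x \<in> L" using sub by auto

definition "cc = (SOME c. c > 0 \<and> (\<forall>x\<in>k. avL x = avk x powr c))"
lemma cc: "cc > 0" "\<And>x. x \<in> k \<Longrightarrow> avL x = avk x powr cc"
proof -
  have "nonarch_abs k avL" using nonarch_abs_subset[OF L.na sub] .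
  then have "\<exists>c>0. \<forall>x\<in>k. avL x = avk x powr c" using K.equiv_abs compat by blast
  then have "cc > 0 \<and> (\<forall>x\<in>k. avL x = avk x powr cc)" unfolding cc_def by (rule someI_ex)
  then show "cc > 0" "\<And>x. x \<in> k \<Longrightarrow> avL x = avk x powr cc" by auto
qed

abbreviation "p \<equiv> K.upi"
definition "lam = avL p"
lemma pk: "p \<in> k" "p \<in> L" using K.upi inL by auto
lemma lam: "lam = (K.q powi (-1)) powr cc" unfolding lam_def using cc(2)[OF pk(1)] K.upi(2) by simp
lemma lam_pos: "0 < lam" using lam K.q_pos by simp
lemma lam_lt1: "lam < 1"
proof -
  have "K.q powi (-1) < 1" using K.qinv_lt1 by simp
  then have "(K.q powi (-1)) powr cc < 1" using K.q_pos cc(1) powr01_less_one[of "K.q powi (-1)" cc] by simp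
  then show ?thesis using lam by simp
qed

lemma transfer_le1: "a \<in> k \<Longrightarrow> avk a \<le> 1 \<Longrightarrow> avL a \<le> 1"
  using cc powr_le1[of cc "avk a"] by simp
lemma transfer_lt1: assumes "a \<in> k" "avk a < 1" shows "avL a \<le> lam"
proof -
  have "avk a \<le> K.q powi (-1)" using K.disc1 assms by simp
  then have "avk a powr cc \<le> (K.q powi (-1)) powr cc" using cc(1) assms(1) by (intro powr_mono2) auto
  then show ?thesis using cc(2)[OF assms(1)] lam by simp
qed
lemma transfer_eq1: "a \<in> k \<Longrightarrow> avk a = 1 \<Longrightarrow> avL a = 1"
  using cc by simp


definition indepmod :: "nat \<Rightarrow> (nat \<Rightarrow> 'a) \<Rightarrow> bool" where
  "indepmod r y \<longleftrightarrow> (\<forall>i<r. y i \<in> L \<and> avL (y i) \<le> 1) \<and>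
     (\<forall>a. (\<forall>i<r. a i \<in> k \<and> avk (a i) \<le> 1) \<and> avL (\<Sum>i<r. a i * y i) \<le> lam \<longrightarrow> (\<forall>i<r. avk (a i) < 1))"

lemma indep_lin: assumes "indepmod r y" shows "lin_indep k {..<r} y"
  unfolding lin_indep_def
proof (intro allI impI ballI)
  fix g j assume g: "(\<forall>j\<in>{..<r}. g j \<in> k) \<and> (\<Sum>j\<in>{..<r}. g j * y j) = 0" and j: "j \<in> {..<r}"
  show "g j = 0"
  proof (rule ccontr)
    assume gj: "g j \<noteq> 0"
    define m where "m = Max ((\<lambda>i. avk (g i)) ` {..<r})"
    have "m \<in> (\<lambda>i. avk (g i)) ` {..<r}" unfolding m_def using j by (intro Max_in) auto
    then obtain i0 where i0: "i0 < r" "avk (g i0) = m" by auto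
    have mge: "avk (g i) \<le> m" if "i < r" for i unfolding m_def using that by (intro Max_ge) auto
    have gk: "g i \<in> k" if "i < r" for i using g that by auto
    have "avk (g j) > 0" using K.av_pos gk j gj by simp
    then have mpos: "m > 0" using mge j by fastforce
    then have g0: "g i0 \<noteq> 0" using i0 by auto
    define a where "a i = g i / g i0" for i
    have ak: "a i \<in> k \<and> avk (a i) \<le> 1" if "i < r" for i
    proof
      show "a i \<in> k" unfolding a_def using gk that i0 by (intro K.divide) auto
      have "avk (a i) = avk (g i) / m" unfolding a_def using K.av_divide gk that i0 by simp
      then show "avk (a i) \<le> 1" using mge[OF that] mpos by simp
    qed
    have "(\<Sum>i<r. a i * y i) = (\<Sum>i<r. g i * y i) / g i0" unfolding a_def
      by (simp add: sum_divide_distrib)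
    also have "\<dots> = 0" using g by simp
    finally have "avL (\<Sum>i<r. a i * y i) \<le> lam" using lam_pos by simp
    then have "avk (a i0) < 1" using assms ak i0(1) unfolding indepmod_def by blast
    moreover have "a i0 = 1" unfolding a_def using g0 by simp
    ultimately show False by simp
  qed
qed

definition "bas = (SOME b::nat \<Rightarrow> 'a. (\<forall>i<d. b i \<in> L) \<and>
        (\<forall>x\<in>L. \<exists>!c::nat \<Rightarrow> 'a. (\<forall>i<d. c i \<in> k) \<and> (\<forall>i\<ge>d. c i = 0) \<and> x = (\<Sum>i<d. c i * b i)))"
lemma bas: "\<forall>i<d. bas i \<in> L" "\<forall>x\<in>L. \<exists>!c::nat \<Rightarrow> 'a. (\<forall>i<d. c i \<in> k) \<and> (\<forall>i\<ge>d. c i = 0) \<and> x = (\<Sum>i<d. c i * bas i)"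
proof -
  have "\<exists>b::nat \<Rightarrow> 'a. (\<forall>i<d. b i \<in> L) \<and>
        (\<forall>x\<in>L. \<exists>!c::nat \<Rightarrow> 'a. (\<forall>i<d. c i \<in> k) \<and> (\<forall>i\<ge>d. c i = 0) \<and> x = (\<Sum>i<d. c i * b i))"
    using deg unfolding ext_degree_def by simp
  then have "(\<forall>i<d. bas i \<in> L) \<and>
        (\<forall>x\<in>L. \<exists>!c::nat \<Rightarrow> 'a. (\<forall>i<d. c i \<in> k) \<and> (\<forall>i\<ge>d. c i = 0) \<and> x = (\<Sum>i<d. c i * bas i))"
    unfolding bas_def by (rule someI_ex)
  then show "\<forall>i<d. bas i \<in> L" "\<forall>x\<in>L. \<exists>!c::nat \<Rightarrow> 'a. (\<forall>i<d. c i \<in> k) \<and> (\<forall>i\<ge>d. c i = 0) \<and> x = (\<Sum>i<d. c i * bas i)"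
    by auto
qed

lemma bas_span: assumes "x \<in> L" shows "in_span k {..<d} bas x"
proof -
  have "\<exists>c::nat \<Rightarrow> 'a. (\<forall>i<d. c i \<in> k) \<and> (\<forall>i\<ge>d. c i = 0) \<and> x = (\<Sum>i<d. c i * bas i)"
    using bas(2) assms by (metis ex1_implies_ex)
  then obtain c where c: "\<forall>i<d. c i \<in> k" "x = (\<Sum>i<d. c i * bas i)" by blast
  show ?thesis unfolding in_span_def using c by auto
qed

lemma bas_indep: "lin_indep k {..<d} bas"
  unfolding lin_indep_def
proof (intro allI impI)
  fix g assume g: "(\<forall>j\<in>{..<d}. g j \<in> k) \<and> (\<Sum>j\<in>{..<d}. g j * bas j) = 0"
  define c1 where "c1 i = (if i < d then g i else 0)" for i
  define c2 where "c2 i = (0::'a)" for i :: nat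
  have u: "\<exists>!c::nat \<Rightarrow> 'a. (\<forall>i<d. c i \<in> k) \<and> (\<forall>i\<ge>d. c i = 0) \<and> 0 = (\<Sum>i<d. c i * bas i)"
    using bas(2) L.zero by blast
  have P1: "(\<forall>i<d. c1 i \<in> k) \<and> (\<forall>i\<ge>d. c1 i = 0) \<and> 0 = (\<Sum>i<d. c1 i * bas i)"
    using g unfolding c1_def by simp
  have P2: "(\<forall>i<d. c2 i \<in> k) \<and> (\<forall>i\<ge>d. c2 i = 0) \<and> 0 = (\<Sum>i<d. c2 i * bas i)"
    unfolding c2_def by simp
  have "c1 = c2" using ex1_eq[where P="\<lambda>c. (\<forall>i<d. c i \<in> k) \<and> (\<forall>i\<ge>d. c i = 0) \<and> 0 = (\<Sum>i<d. c i * bas i)", OF u P1 P2] .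
  then show "\<forall>j\<in>{..<d}. g j = 0" unfolding c1_def c2_def by (metis lessThan_iff)
qed

lemma indep_le: "indepmod r y \<Longrightarrow> r \<le> d"
proof -
  assume h: "indepmod r y"
  have "card {..<r} \<le> card {..<d}"
  proof (rule steinitz[OF K.sf])
    show "lin_indep k {..<r} y" using indep_lin[OF h] .
    show "\<forall>j\<in>{..<r}. in_span k {..<d} bas (y j)" using h bas_span unfolding indepmod_def by auto
  qed auto
  then show ?thesis by simp
qed


definition "rr = Max {r. \<exists>y. indepmod r y}"
definition "yy = (SOME y. indepmod rr y)"

lemma rr: "indepmod rr yy" "rr \<le> d" "\<And>y. \<not> indepmod (Suc rr) y"
proof -
  define S where "S = {r. \<exists>y. indepmod r y}"
  have "S \<subseteq> {..d}"
  proof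
    fix r assume "r \<in> S" then obtain y where "indepmod r y" unfolding S_def by blast
    then show "r \<in> {..d}" using indep_le by simp
  qed
  then have fS: "finite S" using finite_subset by blast
  have "indepmod 0 y" for y unfolding indepmod_def by simp
  then have "0 \<in> S" unfolding S_def by blast
  then have "rr \<in> S" unfolding rr_def S_def[symmetric] using fS by (intro Max_in) auto
  then have "\<exists>y. indepmod rr y" unfolding S_def by simp
  then show i: "indepmod rr yy" unfolding yy_def by (rule someI_ex)
  show "rr \<le> d" using indep_le[OF i] .
  show "\<not> indepmod (Suc rr) y" for y
  proof
    assume "indepmod (Suc rr) y"
    then have "Suc rr \<in> S" unfolding S_def by blast
    then have "Suc rr \<le> rr" unfolding rr_def S_def[symmetric] using fS by (intro Max_ge) auto
    then show False by simp
  qed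
qed

lemma rr_ind: assumes "\<forall>i<rr. a i \<in> k \<and> avk (a i) \<le> 1" "avL (\<Sum>i<rr. a i * yy i) \<le> lam" "i < rr"
  shows "avk (a i) < 1"
proof -
  have h: "\<forall>a. (\<forall>i<rr. a i \<in> k \<and> avk (a i) \<le> 1) \<and> avL (\<Sum>i<rr. a i * yy i) \<le> lam \<longrightarrow> (\<forall>i<rr. avk (a i) < 1)"
    using rr(1) unfolding indepmod_def by (rule conjunct2)
  show ?thesis using h[rule_format, OF conjI[OF assms(1) assms(2)] assms(3)] .
qed

lemma yy: "i < rr \<Longrightarrow> yy i \<in> L" "i < rr \<Longrightarrow> avL (yy i) \<le> 1"
  using rr(1) unfolding indepmod_def by auto

lemma term_bound: assumes "a \<in> k" "avk a \<le> 1" "y \<in> L" "avL y \<le> 1"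
  shows "a * y \<in> L" "avL (a * y) \<le> 1"
proof -
  show "a * y \<in> L" using assms inL by auto
  have "avL a \<le> 1" using transfer_le1 assms by simp
  then show "avL (a * y) \<le> 1" using L.av_le1_mult[OF inL[OF assms(1)] assms(3)] assms(4) by simp
qed

lemma comb_bound: fixes n :: nat assumes "\<And>i. i < n \<Longrightarrow> a i \<in> k \<and> avk (a i) \<le> 1" "\<And>i. i < n \<Longrightarrow> y i \<in> L \<and> avL (y i) \<le> 1"
  shows "(\<Sum>i<n. a i * y i) \<in> L" "avL (\<Sum>i<n. a i * y i) \<le> 1"
proof -
  have t: "a i * y i \<in> L" "avL (a i * y i) \<le> 1" if "i < n" for i
    using term_bound[of "a i" "y i"] assms[OF that] by auto
  show "(\<Sum>i<n. a i * y i) \<in> L" using t by (intro L.sum) auto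
  show "avL (\<Sum>i<n. a i * y i) \<le> 1" using L.av_sum_le[of "{..<n}" "\<lambda>i. a i * y i" 1] t by simp
qed

lemma span_mod: assumes z: "z \<in> L" "avL z \<le> 1"
  shows "\<exists>a. (\<forall>i<rr. a i \<in> k \<and> avk (a i) \<le> 1) \<and> avL (z - (\<Sum>i<rr. a i * yy i)) \<le> lam"
proof -
  define y' where "y' = yy(rr := z)"
  have y'1: "\<forall>i<Suc rr. y' i \<in> L \<and> avL (y' i) \<le> 1"
    unfolding y'_def using yy z by (auto simp: less_Suc_eq)
  have "\<not> indepmod (Suc rr) y'" by (rule rr(3))
  then obtain a where a: "\<forall>i<Suc rr. a i \<in> k \<and> avk (a i) \<le> 1" "avL (\<Sum>i<Suc rr. a i * y' i) \<le> lam"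
     "\<not> (\<forall>i<Suc rr. avk (a i) < 1)"
    using y'1 unfolding indepmod_def by blast
  define S where "S = (\<Sum>i<rr. a i * yy i)"
  define T where "T = (\<Sum>i<Suc rr. a i * y' i)"
  have ST: "T = S + a rr * z"
  proof -
    have "(\<Sum>i<rr. a i * y' i) = S" unfolding S_def y'_def by (rule sum.cong) auto
    then show ?thesis unfolding T_def y'_def by simp
  qed
  have ak: "a i \<in> k" "avk (a i) \<le> 1" if "i < Suc rr" for i using a(1) that by auto
  have SL: "S \<in> L" "avL S \<le> 1" unfolding S_def using comb_bound[of rr a yy] ak yy by auto
  have arL: "a rr \<in> L" using inL ak by simp
  have TL: "T \<in> L" using ST SL arL z by auto
  show ?thesis
  proof (cases "avk (a rr) < 1")
    case True
    have "avL (a rr) \<le> lam" using transfer_lt1 ak True by simp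
    then have az: "avL (a rr * z) \<le> lam" using L.av_mult[OF arL z(1)] z(2) lam_pos L.av_nonneg[OF arL]
      by (metis mult_left_mono mult.right_neutral order_trans L.av_nonneg z(1))
    have "S = T - a rr * z" using ST by simp
    then have "avL S \<le> max (avL T) (avL (a rr * z))" using L.av_diff TL arL z by auto
    then have "avL S \<le> lam" using a(2) az T_def by simp
    then have "\<forall>i<rr. avk (a i) < 1" using rr(1) ak unfolding indepmod_def S_def by auto
    then have "\<forall>i<Suc rr. avk (a i) < 1" using True by (auto simp: less_Suc_eq)
    then show ?thesis using a(3) by blast
  next
    case False
    then have a1: "avk (a rr) = 1" using ak[of rr] by simp
    then have ar0: "a rr \<noteq> 0" by auto
    have aL1: "avL (a rr) = 1" using transfer_eq1 ak a1 by simp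
    define b where "b i = - a i / a rr" for i
    have bk: "b i \<in> k \<and> avk (b i) \<le> 1" if "i < rr" for i
    proof
      show "b i \<in> k" unfolding b_def using ak[of i] ak[of rr] that by (intro K.divide K.uminus) auto
      have dk: "a i / a rr \<in> k" using ak[of i] ak[of rr] that by (intro K.divide) auto
      have "avk (b i) = avk (a i / a rr)" unfolding b_def using K.av_uminus[OF dk] by simp
      also have "\<dots> = avk (a i)" using K.av_divide ak[of i] ak[of rr] that a1 by simp
      finally have "avk (b i) = avk (a i)" .
      then show "avk (b i) \<le> 1" using ak[of i] that by simp
    qed
    have "z - (\<Sum>i<rr. b i * yy i) = T / a rr"
    proof -
      have "(\<Sum>i<rr. b i * yy i) = - S / a rr" unfolding b_def S_def
        by (simp add: sum_divide_distrib[symmetric] sum_negf)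
      then show ?thesis using ST ar0 by (simp add: field_simps)
    qed
    moreover have "avL (T / a rr) = avL T" using L.av_divide[OF TL arL] aL1 by simp
    ultimately have "avL (z - (\<Sum>i<rr. b i * yy i)) \<le> lam" using a(2) T_def by simp
    then show ?thesis using bk by blast
  qed
qed


lemma count_mod: "card (cls L avL lam ` intg L avL) = residue_card k avk ^ rr"
proof -
  obtain R where R: "finite R" "card R = residue_card k avk" "R \<subseteq> k" "\<forall>r\<in>R. avk r \<le> 1"
    "\<forall>a\<in>k. avk a \<le> 1 \<longrightarrow> (\<exists>r\<in>R. avk (a - r) < 1)" "\<forall>r\<in>R. \<forall>r'\<in>R. avk (r - r') < 1 \<longrightarrow> r = r'"
    using K.residue_reps by (elim exE conjE) (rule that)
  have lam0: "0 \<le> lam" using lam_pos by simp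
  define \<phi> where "\<phi> a = cls L avL lam (\<Sum>i<rr. a i * yy i)" for a
  define P where "P = PiE {..<rr} (\<lambda>_. R)"
  have ain: "a i \<in> k \<and> avk (a i) \<le> 1" if "a \<in> P" "i < rr" for a i
    using that R(3,4) unfolding P_def by (auto simp: PiE_mem)
  have yin: "yy i \<in> L \<and> avL (yy i) \<le> 1" if "i < rr" for i using yy that by simp
  have ds: "(\<Sum>i<rr. a i * yy i) \<in> L" "avL (\<Sum>i<rr. a i * yy i) \<le> 1" if "a \<in> P" for a
    using comb_bound[of rr a yy] ain[OF that] yin by auto
  have "bij_betw \<phi> P (cls L avL lam ` intg L avL)"
  proof (rule bij_betw_imageI)
    show "inj_on \<phi> P"
    proof (rule inj_onI)
      fix a a' assume aa: "a \<in> P" "a' \<in> P" "\<phi> a = \<phi> a'"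
      then have h: "avL ((\<Sum>i<rr. a i * yy i) - (\<Sum>i<rr. a' i * yy i)) \<le> lam"
        using L.cls_eq[OF ds(1)[OF aa(1)] ds(1)[OF aa(2)] lam0 ds(2)[OF aa(1)]] unfolding \<phi>_def by simp
      have "(\<Sum>i<rr. a i * yy i) - (\<Sum>i<rr. a' i * yy i) = (\<Sum>i<rr. (a i - a' i) * yy i)"
        by (simp add: sum_subtractf left_diff_distrib)
      with h have h2: "avL (\<Sum>i<rr. (a i - a' i) * yy i) \<le> lam" by simp
      have dk: "\<forall>i<rr. (a i - a' i) \<in> k \<and> avk (a i - a' i) \<le> 1"
      proof (intro allI impI conjI)
        fix i assume "i < rr"
        then have "a i \<in> k \<and> avk (a i) \<le> 1" "a' i \<in> k \<and> avk (a' i) \<le> 1" using ain aa by auto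
        then show "a i - a' i \<in> k" "avk (a i - a' i) \<le> 1" using K.av_diff[of "a i" "a' i"] by auto
      qed
      have "\<forall>i<rr. avk (a i - a' i) < 1"
        using rr_ind[of "\<lambda>i. a i - a' i"] dk h2 by blast
      moreover have "\<forall>i<rr. a i \<in> R \<and> a' i \<in> R" using aa(1,2) unfolding P_def by (auto simp: PiE_mem)
      ultimately have "\<forall>i<rr. a i = a' i" using R(6) by blast
      then show "a = a'" using aa(1,2) unfolding P_def by (intro PiE_ext[of a "{..<rr}" "\<lambda>_. R" a']) auto
    qed
    show "\<phi> ` P = cls L avL lam ` intg L avL"
    proof
      show "\<phi> ` P \<subseteq> cls L avL lam ` intg L avL"
        using ds unfolding \<phi>_def intg_def by blast
      show "cls L avL lam ` intg L avL \<subseteq> \<phi> ` P"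
      proof
        fix C assume "C \<in> cls L avL lam ` intg L avL"
        then obtain z where z: "z \<in> L" "avL z \<le> 1" "C = cls L avL lam z" unfolding intg_def by blast
        obtain a where a: "\<forall>i<rr. a i \<in> k \<and> avk (a i) \<le> 1" "avL (z - (\<Sum>i<rr. a i * yy i)) \<le> lam"
          using span_mod[OF z(1,2)] by blast
        have "\<forall>i<rr. \<exists>\<rho>\<in>R. avk (a i - \<rho>) < 1" using a(1) R(5) by blast
        then obtain \<rho>0 where \<rho>0: "\<forall>i<rr. \<rho>0 i \<in> R \<and> avk (a i - \<rho>0 i) < 1" by metis
        define \<rho> where "\<rho> i = (if i < rr then \<rho>0 i else undefined)" for i
        have \<rho>P: "\<rho> \<in> P" unfolding P_def \<rho>_def using \<rho>0 by (auto simp: PiE_def extensional_def)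
        have \<rho>i: "\<rho> i = \<rho>0 i" if "i < rr" for i using that \<rho>_def by simp
        have dif: "avL ((a i - \<rho> i) * yy i) \<le> lam" if "i < rr" for i
        proof -
          have ik: "a i - \<rho> i \<in> k" using a(1) \<rho>0 R(3) \<rho>i that by auto
          have "avL (a i - \<rho> i) \<le> lam" using transfer_lt1[OF ik] \<rho>0 \<rho>i that by simp
          then show ?thesis using L.av_mult[OF inL[OF ik] yy(1)[OF that]] yy(2)[OF that] lam_pos
              L.av_nonneg[OF inL[OF ik]]
            by (metis mult_left_mono mult.right_neutral order_trans L.av_nonneg yy(1)[OF that])
        qed
        have difL: "(a i - \<rho> i) * yy i \<in> L" if "i < rr" for i
        proof -
          have "a i \<in> k" "\<rho> i \<in> k" using a(1) \<rho>0 R(3) \<rho>i that by auto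
          then have "a i - \<rho> i \<in> L" using inL by auto
          then show ?thesis using yy(1)[OF that] by auto
        qed
        have "avL (\<Sum>i<rr. (a i - \<rho> i) * yy i) \<le> lam"
          using L.av_sum_le[of "{..<rr}" "\<lambda>i. (a i - \<rho> i) * yy i" lam] dif difL lam0 by simp
        moreover have eq: "z - (\<Sum>i<rr. \<rho> i * yy i) = (z - (\<Sum>i<rr. a i * yy i)) + (\<Sum>i<rr. (a i - \<rho> i) * yy i)"
          by (simp add: sum_subtractf left_diff_distrib)
        moreover have m: "z - (\<Sum>i<rr. a i * yy i) \<in> L" "(\<Sum>i<rr. (a i - \<rho> i) * yy i) \<in> L"
          using z(1) ds(1)[OF \<rho>P] a(1) yy inL difL by (auto intro!: L.sum L.diff)
        ultimately have "avL (z - (\<Sum>i<rr. \<rho> i * yy i)) \<le> lam"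
          using L.av_add[OF m] a(2) by (simp only: eq)
        then have "cls L avL lam z = \<phi> \<rho>" unfolding \<phi>_def using L.cls_eq[OF z(1) ds(1)[OF \<rho>P] lam0 z(2)] by simp
        then show "C \<in> \<phi> ` P" using z(3) \<rho>P by blast
      qed
    qed
  qed
  then have "card (cls L avL lam ` intg L avL) = card P" by (simp add: bij_betw_same_card)
  also have "\<dots> = residue_card k avk ^ rr" unfolding P_def by (simp add: card_PiE R(2))
  finally show ?thesis .
qed


lemma p_nz: "p \<noteq> 0" using K.upi_nz .
lemma avL_ppow: "avL (p ^ n) = lam ^ n" using L.av_power[OF pk(2)] lam_def by simp

lemma span_complete: assumes z: "z \<in> L" "avL z \<le> 1"
  shows "\<exists>A. (\<forall>i<rr. A i \<in> k \<and> avk (A i) \<le> 1) \<and> z = (\<Sum>i<rr. A i * yy i)"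
proof -
  define OL where "OL = {z \<in> L. avL z \<le> 1}"
  define coef where "coef w = (SOME a. (\<forall>i<rr. a i \<in> k \<and> avk (a i) \<le> 1) \<and> avL (w - (\<Sum>i<rr. a i * yy i)) \<le> lam)" for w
  have coef: "(\<forall>i<rr. coef w i \<in> k \<and> avk (coef w i) \<le> 1) \<and> avL (w - (\<Sum>i<rr. coef w i * yy i)) \<le> lam"
    if "w \<in> OL" for w
  proof -
    have "w \<in> L" "avL w \<le> 1" using that unfolding OL_def by auto
    from span_mod[OF this] show ?thesis unfolding coef_def by (rule someI_ex)
  qed
  define nxt where "nxt w = (w - (\<Sum>i<rr. coef w i * yy i)) / p" for w
  have cL: "(\<Sum>i<rr. coef w i * yy i) \<in> L" if "w \<in> OL" for w
    using comb_bound[of rr "coef w" yy] coef[OF that] yy by auto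
  have nxt: "nxt w \<in> OL" "w = (\<Sum>i<rr. coef w i * yy i) + p * nxt w" if w: "w \<in> OL" for w
  proof -
    have wL: "w \<in> L" using w OL_def by simp
    have dL: "w - (\<Sum>i<rr. coef w i * yy i) \<in> L" using wL cL[OF w] by auto
    have "nxt w \<in> L" unfolding nxt_def using dL pk by auto
    moreover have "avL (nxt w) = avL (w - (\<Sum>i<rr. coef w i * yy i)) / lam"
      unfolding nxt_def lam_def using L.av_divide[OF dL pk(2)] by simp
    moreover have "avL (w - (\<Sum>i<rr. coef w i * yy i)) / lam \<le> 1" using coef[OF w] lam_pos by simp
    ultimately show "nxt w \<in> OL" unfolding OL_def by simp
    show "w = (\<Sum>i<rr. coef w i * yy i) + p * nxt w" unfolding nxt_def using p_nz by simp
  qed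
  define zs where "zs n = (nxt ^^ n) z" for n
  have zs0: "zs 0 = z" and zsS: "zs (Suc n) = nxt (zs n)" for n unfolding zs_def by simp_all
  have zsO: "zs n \<in> OL" for n
  proof (induction n)
    case 0 then show ?case using zs0 z OL_def by simp
  next
    case (Suc n) then show ?case using zsS nxt(1) by simp
  qed
  define dg where "dg j i = coef (zs j) i" for j i
  have dgk: "dg j i \<in> k" "avk (dg j i) \<le> 1" if "i < rr" for j i using coef[OF zsO[of j]] that unfolding dg_def by auto
  define P where "P N i = (\<Sum>j<N. p ^ j * dg j i)" for N i
  have Pk: "P N i \<in> k" if "i < rr" for N i unfolding P_def using dgk[OF that] pk by (intro K.sum K.mult K.power) auto
  have inv: "z = (\<Sum>i<rr. P N i * yy i) + p ^ N * zs N" for N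
  proof (induction N)
    case 0 then show ?case unfolding P_def using zs0 by simp
  next
    case (Suc N)
    have e1: "zs N = (\<Sum>i<rr. dg N i * yy i) + p * zs (Suc N)" using nxt(2)[OF zsO[of N]] zsS dg_def by simp
    have e2: "(\<Sum>i<rr. P (Suc N) i * yy i) = (\<Sum>i<rr. P N i * yy i) + p ^ N * (\<Sum>i<rr. dg N i * yy i)"
      unfolding P_def by (simp add: distrib_right sum.distrib sum_distrib_left mult.assoc)
    show ?case using Suc.IH unfolding e2 by (subst (asm) e1) (simp add: algebra_simps)
  qed
  have q1: "K.q powi (- int j) \<le> K.q powi (- int N)" if "N \<le> j" for N j
    using K.q_gt1 that by (intro power_int_increasing) auto
  have cauchy: "avk (P M i - P N i) \<le> K.q powi (- int N)" if "N \<le> M" "i < rr" for N M i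
  proof -
    have "P M i = P N i + (\<Sum>j\<in>{N..<M}. p ^ j * dg j i)"
      unfolding P_def using sum.atLeastLessThan_concat[of 0 N M "\<lambda>j. p ^ j * dg j i"] that
      by (simp add: atLeast0LessThan)
    then have "P M i - P N i = (\<Sum>j\<in>{N..<M}. p ^ j * dg j i)" by simp
    also have "avk \<dots> \<le> K.q powi (- int N)"
    proof (rule K.av_sum_le)
      fix j assume j: "j \<in> {N..<M}"
      show "p ^ j * dg j i \<in> k" using dgk[OF that(2)] pk by auto
      have "avk (p ^ j * dg j i) = K.q powi (- int j) * avk (dg j i)"
        using K.av_mult[OF K.power[OF pk(1)] dgk(1)[OF that(2)]] K.av_upi_pow by simp
      also have "\<dots> \<le> K.q powi (- int j)" using dgk[OF that(2)] K.q_pos by (simp add: mult_le_one)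
      also have "\<dots> \<le> K.q powi (- int N)" using q1 j by simp
      finally show "avk (p ^ j * dg j i) \<le> K.q powi (- int N)" .
    qed (use K.q_pos in auto)
    finally show ?thesis .
  qed
  have small: "\<exists>N. K.q powi (- int N) < e" if e0: "e > 0" for e
  proof -
    obtain N where "(inverse K.q) ^ N < e" using real_arch_pow_inv[OF e0 K.qinv_lt1] by blast
    then show ?thesis by (auto simp: power_int_minus power_inverse)
  qed
  have lim: "\<exists>l\<in>k. \<forall>e>0. \<exists>N. \<forall>n\<ge>N. avk (P n i - l) < e" if i: "i < rr" for i
  proof -
    have "\<forall>e>0. \<exists>N. \<forall>a\<ge>N. \<forall>b\<ge>N. avk (P a i - P b i) < e"
    proof (intro allI impI)
      fix e :: real assume "e > 0"
      then obtain N where N: "K.q powi (- int N) < e" using small by blast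
      show "\<exists>N. \<forall>a\<ge>N. \<forall>b\<ge>N. avk (P a i - P b i) < e"
      proof (intro exI allI impI)
        fix a b assume ab: "N \<le> a" "N \<le> b"
        show "avk (P a i - P b i) < e"
        proof (cases "a \<le> b")
          case True
          have "avk (P a i - P b i) = avk (P b i - P a i)" using K.av_commute Pk i by simp
          also have "\<dots> \<le> K.q powi (- int a)" using cauchy True i by simp
          also have "\<dots> \<le> K.q powi (- int N)" using q1 ab by simp
          finally show ?thesis using N by simp
        next
          case False
          have "avk (P a i - P b i) \<le> K.q powi (- int b)" using cauchy False i by simp
          also have "\<dots> \<le> K.q powi (- int N)" using q1 ab by simp
          finally show ?thesis using N by simp
        qed
      qed
    qed
    moreover have "\<forall>n. P n i \<in> k" using Pk i by simp
    ultimately have cc1: "(\<forall>n. P n i \<in> k) \<and> (\<forall>e>0. \<exists>N. \<forall>a\<ge>N. \<forall>b\<ge>N. avk (P a i - P b i) < e)" by (rule conjI[rotated])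
    have "(\<forall>n. P n i \<in> k) \<and> (\<forall>e>0. \<exists>N. \<forall>a\<ge>N. \<forall>b\<ge>N. avk (P a i - P b i) < e) \<longrightarrow>
          (\<exists>l\<in>k. \<forall>e>0. \<exists>N. \<forall>n\<ge>N. avk (P n i - l) < e)"
      using K.compl unfolding abs_complete_def by (rule spec)
    then show ?thesis using cc1 by (rule mp)
  qed
  then obtain A where A: "\<And>i. i < rr \<Longrightarrow> A i \<in> k \<and> (\<forall>e>0. \<exists>N. \<forall>n\<ge>N. avk (P n i - A i) < e)" by metis
  have ev: "eventually (\<lambda>n. avk (P n i - A i) < e) sequentially" if "i < rr" "e > 0" for i e
    using A[OF that(1)] that(2) unfolding eventually_sequentially by blast
  have AL: "A i \<in> L" if "i < rr" for i using A[OF that] inL by blast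
  define D where "D = z - (\<Sum>i<rr. A i * yy i)"
  have DL: "D \<in> L" unfolding D_def using z(1) AL yy by (auto intro!: L.diff L.sum)
  have Dsmall: "avL D \<le> e" if e0: "e > 0" for e
  proof -
    define e' where "e' = e powr (1 / cc)"
    have e'0: "e' > 0" unfolding e'_def using e0 by simp
    have e'c: "e' powr cc = e" unfolding e'_def using e0 cc(1) by (simp add: powr_powr)
    have ev1: "eventually (\<lambda>n. \<forall>i\<in>{..<rr}. avk (P n i - A i) < e') sequentially"
      by (rule eventually_ball_finite) (use ev e'0 in auto)
    obtain N0 where N0: "lam ^ N0 < e" using real_arch_pow_inv[OF e0 lam_lt1] by blast
    have ev2: "eventually (\<lambda>n. lam ^ n < e) sequentially"
      unfolding eventually_sequentially
    proof (intro exI allI impI)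
      fix n assume "N0 \<le> n"
      then have "lam ^ n \<le> lam ^ N0" using lam_pos lam_lt1 by (intro power_decreasing) auto
      then show "lam ^ n < e" using N0 by simp
    qed
    have "eventually (\<lambda>n. (\<forall>i\<in>{..<rr}. avk (P n i - A i) < e') \<and> lam ^ n < e) sequentially"
      using ev1 ev2 by (rule eventually_conj)
    then obtain N where N: "\<forall>i\<in>{..<rr}. avk (P N i - A i) < e'" "lam ^ N < e"
      unfolding eventually_sequentially by blast
    have DD: "D = (\<Sum>i<rr. (P N i - A i) * yy i) + p ^ N * zs N"
    proof -
      have "D = (\<Sum>i<rr. P N i * yy i) + p ^ N * zs N - (\<Sum>i<rr. A i * yy i)" unfolding D_def using inv[of N] by simp
      also have "\<dots> = (\<Sum>i<rr. (P N i - A i) * yy i) + p ^ N * zs N"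
        by (simp add: sum_subtractf left_diff_distrib)
      finally show ?thesis .
    qed
    have zsL: "zs N \<in> L" "avL (zs N) \<le> 1" using zsO[of N] OL_def by auto
    have t1: "p ^ N * zs N \<in> L" using zsL pk by auto
    have "avL (p ^ N * zs N) = lam ^ N * avL (zs N)" using L.av_mult[OF L.power[OF pk(2)] zsL(1)] avL_ppow by simp
    also have "\<dots> \<le> lam ^ N" using zsL(2) lam_pos by (simp add: mult_le_one)
    finally have t1b: "avL (p ^ N * zs N) \<le> e" using N(2) by simp
    have t2: "(P N i - A i) * yy i \<in> L \<and> avL ((P N i - A i) * yy i) \<le> e" if i: "i < rr" for i
    proof
      have dk: "P N i - A i \<in> k" using Pk[OF i] A[OF i] by auto
      show "(P N i - A i) * yy i \<in> L" using inL[OF dk] yy(1)[OF i] by auto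
      have "avL ((P N i - A i) * yy i) = avL (P N i - A i) * avL (yy i)" using L.av_mult inL[OF dk] yy(1)[OF i] by simp
      also have "\<dots> \<le> avL (P N i - A i)" using yy(2)[OF i] L.av_nonneg[OF inL[OF dk]] by (simp add: mult_left_le)
      also have "\<dots> = avk (P N i - A i) powr cc" using cc(2)[OF dk] .
      also have "\<dots> \<le> e' powr cc"
      proof -
        have "avk (P N i - A i) < e'" using N(1) i by simp
        then show ?thesis using cc(1) K.av_nonneg[OF dk] by (intro powr_mono2) auto
      qed
      finally show "avL ((P N i - A i) * yy i) \<le> e" using e'c by simp
    qed
    have t2b: "avL (\<Sum>i<rr. (P N i - A i) * yy i) \<le> e"
      using L.av_sum_le[of "{..<rr}" "\<lambda>i. (P N i - A i) * yy i" e] t2 e0 by simp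
    have t2L: "(\<Sum>i<rr. (P N i - A i) * yy i) \<in> L" using t2 by (intro L.sum) auto
    have "avL D \<le> max (avL (\<Sum>i<rr. (P N i - A i) * yy i)) (avL (p ^ N * zs N))"
      unfolding DD by (rule L.av_add[OF t2L t1])
    then show ?thesis using t1b t2b by simp
  qed
  have "avL D = 0"
  proof (rule ccontr)
    assume "avL D \<noteq> 0"
    then have "avL D > 0" using L.av_nonneg[OF DL] by simp
    then have "avL D \<le> avL D / 2" using Dsmall[of "avL D / 2"] by simp
    then show False using \<open>avL D > 0\<close> by simp
  qed
  then have "D = 0" using DL by simp
  then have zA: "z = (\<Sum>i<rr. A i * yy i)" unfolding D_def by simp
  have A1: "avk (A i) \<le> 1" if i: "i < rr" for i
  proof -
    have "\<forall>e>0. \<exists>N. \<forall>n\<ge>N. avk (P n i - A i) < e" using A[OF i] by simp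
    then obtain N0 where "\<forall>n\<ge>N0. avk (P n i - A i) < 1" by (meson zero_less_one)
    then have N: "avk (P N0 i - A i) < 1" by simp
    define N where "N = N0"
    have "avk (P N i) \<le> 1" unfolding P_def
    proof (rule K.av_sum_le)
      fix j assume j: "j \<in> {..<N}"
      show "p ^ j * dg j i \<in> k" using dgk[OF i] pk by auto
      have "avk (p ^ j * dg j i) = K.q powi (- int j) * avk (dg j i)"
        using K.av_mult[OF K.power[OF pk(1)] dgk(1)[OF i]] K.av_upi_pow by simp
      also have "\<dots> \<le> K.q powi (- int j)" using dgk[OF i] K.q_pos by (simp add: mult_le_one)
      also have "\<dots> \<le> 1" by (rule K.qpow_neg_le1)
      finally show "avk (p ^ j * dg j i) \<le> 1" .
    qed auto
    moreover have "avk (A i) \<le> max (avk (P N i)) (avk (P N i - A i))"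
    proof -
      have "avk (P N i - (P N i - A i)) \<le> max (avk (P N i)) (avk (P N i - A i))"
        using Pk[OF i] A[OF i] by (intro K.av_diff K.diff) auto
      then show ?thesis by simp
    qed
    ultimately show ?thesis using N N_def by simp
  qed
  show ?thesis using zA A1 A by blast
qed


lemma span_all: assumes x: "x \<in> L" shows "in_span k {..<rr} yy x"
proof -
  obtain N where N: "avL (p ^ N * x) \<le> 1"
  proof (cases "avL x = 0")
    case True then show ?thesis using that[of 0] by simp
  next
    case False
    then have ax: "avL x > 0" using L.av_nonneg[OF x] by simp
    obtain N where "lam ^ N < inverse (avL x)" using real_arch_pow_inv[of "inverse (avL x)" lam] ax lam_lt1 by auto
    then have "lam ^ N * avL x \<le> 1" using ax by (simp add: field_simps)
    then show ?thesis using that[of N] L.av_mult[OF L.power[OF pk(2)] x] avL_ppow by simp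
  qed
  have "p ^ N * x \<in> L" using x pk by auto
  then obtain A where A: "\<forall>i<rr. A i \<in> k \<and> avk (A i) \<le> 1" "p ^ N * x = (\<Sum>i<rr. A i * yy i)"
    using span_complete N by blast
  have pN: "p ^ N \<noteq> 0" using p_nz by simp
  have "x = (\<Sum>i<rr. (A i / p ^ N) * yy i)"
  proof -
    have "x = (p ^ N * x) / p ^ N" using pN by simp
    also have "\<dots> = (\<Sum>i<rr. (A i / p ^ N) * yy i)" unfolding A(2) by (simp add: sum_divide_distrib)
    finally show ?thesis .
  qed
  moreover have "\<forall>i\<in>{..<rr}. A i / p ^ N \<in> k"
  proof
    fix i assume "i \<in> {..<rr}"
    then have "A i \<in> k" using A(1) by simp
    then show "A i / p ^ N \<in> k" using K.divide K.power pk(1) by blast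
  qed
  ultimately show ?thesis unfolding in_span_def by (intro exI[of _ "\<lambda>i. A i / p ^ N"]) simp
qed

lemma rr_eq: "rr = d"
proof -
  have "card {..<d} \<le> card {..<rr}"
  proof (rule steinitz[OF K.sf])
    show "lin_indep k {..<d} bas" by (rule bas_indep)
    show "\<forall>j\<in>{..<d}. in_span k {..<rr} yy (bas j)" using bas(1) span_all by auto
  qed auto
  then show ?thesis using rr(2) by simp
qed

lemma d_pos: "d > 0"
proof (rule ccontr)
  assume "\<not> d > 0" then have d0: "d = 0" by simp
  have "in_span k {..<d} bas 1" using bas_span L.one by blast
  then show False unfolding in_span_def d0 by simp
qed

lemma lam_eq: "lam = K.q powi (- int d)"
proof -
  have "lam \<in> avL ` (L - {0})" unfolding lam_def using pk p_nz by blast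
  then obtain n where n: "lam = L.q powi n" using L.vg by auto
  have "n < 0"
  proof (rule ccontr)
    assume "\<not> n < 0"
    then have "1 \<le> L.q powi n" using L.q_gt1 by (metis linorder_not_less one_le_power_int order_less_imp_le)
    then show False using n lam_lt1 by simp
  qed
  define e where "e = nat (- n)"
  have ne: "n = - int e" unfolding e_def using \<open>n < 0\<close> by simp
  have "card (cls L avL lam ` intg L avL) = residue_card L avL ^ e" using L.count_digits[of e] n ne by simp
  then have nat_eq: "residue_card L avL ^ e = residue_card k avk ^ d" using count_mod rr_eq by simp
  have "lam = inverse (L.q ^ e)" using n ne by (simp add: power_int_minus)
  also have "L.q ^ e = K.q ^ d" using arg_cong[OF nat_eq, of real] by simp
  finally show ?thesis by (simp add: power_int_minus)
qed

lemma cc_eq: "cc = real d"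
proof -
  have "K.q powr (- cc) = K.q powr (- real d)"
  proof -
    have "K.q powr (- cc) = (K.q powi (-1)) powr cc" using K.q_pos
      by (simp add: powr_minus_divide power_int_minus powr_divide inverse_eq_divide)
    also have "\<dots> = lam" using lam by simp
    also have "\<dots> = K.q powi (- int d)" by (rule lam_eq)
    also have "\<dots> = K.q powr (- real d)" using K.powi_as_powr by simp
    finally show ?thesis .
  qed
  then show ?thesis using K.q_gt1 K.q_pos by (simp add: powr_inj)
qed

theorem restrict_pow: "x \<in> k \<Longrightarrow> avL x = avk x ^ d"
proof -
  assume x: "x \<in> k"
  show ?thesis
  proof (cases "x = 0")
    case True then show ?thesis using d_pos by simp
  next
    case False
    then have "avk x > 0" using K.av_pos x by simp
    then show ?thesis using cc(2)[OF x] cc_eq by (simp add: powr_realpow)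
  qed
qed

theorem int_span: "\<exists>(r::nat) y. (\<forall>i<r. y i \<in> L) \<and> (\<forall>z\<in>L. avL z \<le> 1 \<longrightarrow>
    (\<exists>A. (\<forall>i<r. A i \<in> k \<and> avk (A i) \<le> 1) \<and> z = (\<Sum>i<r. A i * y i)))"
proof -
  have a: "\<forall>i<rr. yy i \<in> L" using yy(1) by simp
  have b: "\<forall>z\<in>L. avL z \<le> 1 \<longrightarrow> (\<exists>A. (\<forall>i<rr. A i \<in> k \<and> avk (A i) \<le> 1) \<and> z = (\<Sum>i<rr. A i * yy i))"
    using span_complete by simp
  show ?thesis using conjI[OF a b] by (rule_tac x=rr in exI, rule_tac x=yy in exI)
qed

end

lemma per_psd:
  fixes R :: "nat \<Rightarrow> nat \<Rightarrow> bool" and c :: "nat \<Rightarrow> complex"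
  assumes sym: "\<And>i j. i < n \<Longrightarrow> j < n \<Longrightarrow> R i j \<Longrightarrow> R j i"
      and trans: "\<And>i j l. i < n \<Longrightarrow> j < n \<Longrightarrow> l < n \<Longrightarrow> R i j \<Longrightarrow> R j l \<Longrightarrow> R i l"
  shows "\<exists>r\<ge>0. (\<Sum>i<n. \<Sum>j<n. c i * cnj (c j) * (if R i j then 1 else 0)) = complex_of_real r"
proof -
  define cls where "cls i = {j. j < n \<and> R i j}" for i
  define CL where "CL = cls ` {i. i < n \<and> R i i}"
  have fCL: "finite CL" unfolding CL_def by simp
  have key: "(if R i j then 1 else 0) = (\<Sum>K\<in>CL. (if i \<in> K \<and> j \<in> K then 1 else 0 :: complex))"
    if ij: "i < n" "j < n" for i j
  proof (cases "R i j")
    case True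
    then have Rii: "R i i" using sym trans ij by blast
    have "(\<Sum>K\<in>CL. (if i \<in> K \<and> j \<in> K then 1 else 0 :: complex)) = (\<Sum>K\<in>CL. (if K = cls i then 1 else 0))"
    proof (rule sum.cong)
      fix K assume "K \<in> CL"
      then obtain l where l: "l < n" "R l l" "K = cls l" unfolding CL_def by blast
      have "i \<in> K \<and> j \<in> K \<longleftrightarrow> K = cls i"
      proof
        assume h: "i \<in> K \<and> j \<in> K"
        then have Rli: "R l i" using l cls_def by simp
        then have Ril: "R i l" using sym l ij by blast
        have "R l x \<longleftrightarrow> R i x" if "x < n" for x using trans[OF ij(1) l(1) that Ril] trans[OF l(1) ij(1) that Rli] by blast
        then show "K = cls i" unfolding l(3) cls_def by blast
      next
        assume "K = cls i" then show "i \<in> K \<and> j \<in> K" unfolding cls_def using Rii True ij by simp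
      qed
      then show "(if i \<in> K \<and> j \<in> K then 1 else 0 :: complex) = (if K = cls i then 1 else 0)" by simp
    qed simp
    also have "\<dots> = 1" using fCL Rii ij unfolding CL_def by (simp add: sum.delta)
    finally show ?thesis using True by simp
  next
    case False
    have "(\<Sum>K\<in>CL. (if i \<in> K \<and> j \<in> K then 1 else 0 :: complex)) = 0"
    proof (rule sum.neutral, rule ballI)
      fix K assume "K \<in> CL"
      then obtain l where l: "l < n" "R l l" "K = cls l" unfolding CL_def by blast
      have "\<not> (i \<in> K \<and> j \<in> K)"
      proof
        assume "i \<in> K \<and> j \<in> K"
        then have "R l i" "R l j" using l cls_def by auto
        then have "R i j" using sym trans l ij by blast
        then show False using False by simp
      qed
      then show "(if i \<in> K \<and> j \<in> K then 1 else 0 :: complex) = 0" by simp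
    qed
    then show ?thesis using False by simp
  qed
  define v where "v K = (\<Sum>i<n. if i \<in> K then c i else 0)" for K
  have vv: "v K * cnj (v K) = (\<Sum>i<n. \<Sum>j<n. c i * cnj (c j) * (if i \<in> K \<and> j \<in> K then 1 else 0))" for K
  proof -
    have "v K * cnj (v K) = (\<Sum>i<n. \<Sum>j<n. (if i \<in> K then c i else 0) * cnj (if j \<in> K then c j else 0))"
      unfolding v_def cnj_sum by (rule sum_product)
    also have "\<dots> = (\<Sum>i<n. \<Sum>j<n. c i * cnj (c j) * (if i \<in> K \<and> j \<in> K then 1 else 0))"
      by (intro sum.cong refl) auto
    finally show ?thesis .
  qed
  have "(\<Sum>i<n. \<Sum>j<n. c i * cnj (c j) * (if R i j then 1 else 0)) =
        (\<Sum>i<n. \<Sum>j<n. \<Sum>K\<in>CL. c i * cnj (c j) * (if i \<in> K \<and> j \<in> K then 1 else 0))"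
    by (intro sum.cong refl) (simp add: key sum_distrib_left)
  also have "\<dots> = (\<Sum>i<n. \<Sum>K\<in>CL. \<Sum>j<n. c i * cnj (c j) * (if i \<in> K \<and> j \<in> K then 1 else 0))"
    by (intro sum.cong refl) (rule sum.swap)
  also have "\<dots> = (\<Sum>K\<in>CL. \<Sum>i<n. \<Sum>j<n. c i * cnj (c j) * (if i \<in> K \<and> j \<in> K then 1 else 0))"
    by (rule sum.swap)
  also have "\<dots> = (\<Sum>K\<in>CL. v K * cnj (v K))" by (simp add: vv)
  also have "\<dots> = (\<Sum>K\<in>CL. complex_of_real ((Re (v K))\<^sup>2 + (Im (v K))\<^sup>2))" by (simp add: complex_mult_cnj)
  also have "\<dots> = complex_of_real (\<Sum>K\<in>CL. (Re (v K))\<^sup>2 + (Im (v K))\<^sup>2)" by simp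
  finally show ?thesis by (intro exI[of _ "\<Sum>K\<in>CL. (Re (v K))\<^sup>2 + (Im (v K))\<^sup>2"]) (auto intro: sum_nonneg)
qed


definition posvals :: "nat \<Rightarrow> (nat \<Rightarrow> nat \<Rightarrow> real) \<Rightarrow> real set" where
  "posvals n f = {v. \<exists>i<n. \<exists>j<n. v = f i j \<and> 0 < v}"

lemma posvals_finite: "finite (posvals n f)"
proof -
  have "posvals n f \<subseteq> (\<lambda>(i, j). f i j) ` ({..<n} \<times> {..<n})" unfolding posvals_def by auto
  then show ?thesis by (rule finite_subset) simp
qed

lemma ultra_psd_aux:
  fixes c :: "nat \<Rightarrow> complex"
  shows "card (posvals n f) = M \<Longrightarrow> (\<And>i j. i < n \<Longrightarrow> j < n \<Longrightarrow> 0 \<le> f i j) \<Longrightarrow>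
    (\<And>i j. i < n \<Longrightarrow> j < n \<Longrightarrow> f i j = f j i) \<Longrightarrow>
    (\<And>i j l. i < n \<Longrightarrow> j < n \<Longrightarrow> l < n \<Longrightarrow> min (f i j) (f j l) \<le> f i l) \<Longrightarrow>
    \<exists>r\<ge>0. (\<Sum>i<n. \<Sum>j<n. c i * cnj (c j) * complex_of_real (f i j)) = complex_of_real r"
proof (induction M arbitrary: f rule: less_induct)
  case (less M f)
  note nn = less.prems(2) and sy = less.prems(3) and ul = less.prems(4)
  show ?case
  proof (cases "posvals n f = {}")
    case True
    have "f i j = 0" if "i < n" "j < n" for i j
    proof (rule ccontr)
      assume "f i j \<noteq> 0" then have "0 < f i j" using nn[OF that] by simp
      then have "f i j \<in> posvals n f" unfolding posvals_def using that by blast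
      then show False using True by simp
    qed
    then have "(\<Sum>i<n. \<Sum>j<n. c i * cnj (c j) * complex_of_real (f i j)) = 0" by simp
    then show ?thesis by (intro exI[of _ 0]) simp
  next
    case False
    define a where "a = Min (posvals n f)"
    have aV: "a \<in> posvals n f" unfolding a_def using False posvals_finite by (rule Min_in[rotated])
    then have apos: "0 < a" unfolding posvals_def by auto
    have age: "a \<le> f i j" if "i < n" "j < n" "0 < f i j" for i j
    proof -
      have "f i j \<in> posvals n f" unfolding posvals_def using that by blast
      then show ?thesis unfolding a_def using posvals_finite by simp
    qed
    define f' where "f' i j = max (f i j - a) 0" for i j
    define R where "R i j = (0 < f i j)" for i j
    have split: "complex_of_real (f i j) = complex_of_real a * (if R i j then 1 else 0) + complex_of_real (f' i j)"
      if "i < n" "j < n" for i j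
    proof (cases "0 < f i j")
      case True then show ?thesis using age[OF that True] unfolding R_def f'_def by simp
    next
      case False then have "f i j = 0" using nn[OF that] by simp
      then show ?thesis unfolding R_def f'_def using apos by simp
    qed
    have Q: "(\<Sum>i<n. \<Sum>j<n. c i * cnj (c j) * complex_of_real (f i j)) =
      complex_of_real a * (\<Sum>i<n. \<Sum>j<n. c i * cnj (c j) * (if R i j then 1 else 0)) +
      (\<Sum>i<n. \<Sum>j<n. c i * cnj (c j) * complex_of_real (f' i j))"
      by (simp add: split sum.distrib sum_distrib_left algebra_simps)
    obtain r1 where r1: "r1 \<ge> 0" "(\<Sum>i<n. \<Sum>j<n. c i * cnj (c j) * (if R i j then 1 else 0)) = complex_of_real r1"
    proof -
      have "\<exists>r\<ge>0. (\<Sum>i<n. \<Sum>j<n. c i * cnj (c j) * (if R i j then 1 else 0)) = complex_of_real r"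
      proof (rule per_psd)
        show "R j i" if "i < n" "j < n" "R i j" for i j using that sy unfolding R_def by simp
        show "R i l" if "i < n" "j < n" "l < n" "R i j" "R j l" for i j l
          using that ul[of i j l] unfolding R_def by (simp add: min_def split: if_splits)
      qed
      then show ?thesis using that by blast
    qed
    have pv: "posvals n f' = (\<lambda>v. v - a) ` (posvals n f - {a})"
    proof
      show "posvals n f' \<subseteq> (\<lambda>v. v - a) ` (posvals n f - {a})"
      proof
        fix v assume "v \<in> posvals n f'"
        then obtain i j where ij: "i < n" "j < n" "v = f' i j" "0 < v" unfolding posvals_def by blast
        then have "f i j > a" unfolding f'_def by (simp add: max_def split: if_splits)
        then have "f i j \<in> posvals n f - {a}" unfolding posvals_def using ij apos by auto
        moreover have "v = f i j - a" using ij \<open>f i j > a\<close> unfolding f'_def by simp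
        ultimately show "v \<in> (\<lambda>v. v - a) ` (posvals n f - {a})" by blast
      qed
      show "(\<lambda>v. v - a) ` (posvals n f - {a}) \<subseteq> posvals n f'"
      proof
        fix w assume "w \<in> (\<lambda>v. v - a) ` (posvals n f - {a})"
        then obtain v where v: "v \<in> posvals n f" "v \<noteq> a" "w = v - a" by blast
        then obtain i j where ij: "i < n" "j < n" "v = f i j" "0 < v" unfolding posvals_def by blast
        then have "a < f i j" using age[of i j] v(2) by simp
        then have "w = f' i j" "0 < w" using v(3) ij(3) unfolding f'_def by simp_all
        then show "w \<in> posvals n f'" unfolding posvals_def using ij by blast
      qed
    qed
    have "card (posvals n f') = card (posvals n f - {a})"
      unfolding pv by (rule card_image) (simp add: inj_on_def)
    also have "\<dots> < card (posvals n f)" using card_Diff1_less[OF posvals_finite aV] .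
    finally have lt: "card (posvals n f') < M" using less.prems(1) by simp
    obtain r2 where r2: "r2 \<ge> 0" "(\<Sum>i<n. \<Sum>j<n. c i * cnj (c j) * complex_of_real (f' i j)) = complex_of_real r2"
    proof -
      have "\<exists>r\<ge>0. (\<Sum>i<n. \<Sum>j<n. c i * cnj (c j) * complex_of_real (f' i j)) = complex_of_real r"
      proof (rule less.IH[OF lt refl])
        show "0 \<le> f' i j" for i j unfolding f'_def by simp
        show "f' i j = f' j i" if "i < n" "j < n" for i j unfolding f'_def using sy[OF that] by simp
        show "min (f' i j) (f' j l) \<le> f' i l" if "i < n" "j < n" "l < n" for i j l
          using ul[OF that] unfolding f'_def by (simp add: min_def max_def split: if_splits)
      qed
      then show ?thesis using that by blast
    qed
    show ?thesis using Q r1 r2 apos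
      by (intro exI[of _ "a * r1 + r2"]) simp
  qed
qed

lemma ultra_psd:
  fixes c :: "nat \<Rightarrow> complex"
  assumes "\<And>i j. i < n \<Longrightarrow> j < n \<Longrightarrow> 0 \<le> f i j" "\<And>i j. i < n \<Longrightarrow> j < n \<Longrightarrow> f i j = f j i"
    "\<And>i j l. i < n \<Longrightarrow> j < n \<Longrightarrow> l < n \<Longrightarrow> min (f i j) (f j l) \<le> f i l"
  shows "\<exists>r\<ge>0. (\<Sum>i<n. \<Sum>j<n. c i * cnj (c j) * complex_of_real (f i j)) = complex_of_real r"
  using ultra_psd_aux[OF refl assms] .

lemma nlf_of: "normalized_local_field F av \<Longrightarrow> nlf F av"
  unfolding normalized_local_field_def by unfold_locales auto

lemma rho_nonneg: "0 \<le> rho \<alpha> s t" unfolding rho_def by simp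

lemma rho_antimono: assumes "\<alpha> > 0" "t > 0" "s \<le> s'" shows "rho \<alpha> s' t \<le> rho \<alpha> s t"
proof (cases "s' > 1")
  case True
  show ?thesis
  proof (cases "s > 1")
    case True
    have "s powr \<alpha> \<le> s' powr \<alpha>" using assms True by (intro powr_mono2) auto
    then have "- t * s' powr \<alpha> \<le> - t * s powr \<alpha>" using assms by simp
    then show ?thesis unfolding rho_def using True \<open>s' > 1\<close> by simp
  next
    case False
    then show ?thesis unfolding rho_def using \<open>s' > 1\<close> assms
      by (simp add: mult_pos_pos)
  qed
next
  case False
  then show ?thesis unfolding rho_def using assms by simp
qed

locale tower =
  fixes K :: "nat \<Rightarrow> 'a::field_char_0 set" and av :: "nat \<Rightarrow> 'a \<Rightarrow> real" and m :: "nat \<Rightarrow> nat"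
  assumes chain: "\<And>n. K n \<subseteq> K (Suc n)"
    and union: "(\<Union>n. K n) = UNIV"
    and loc: "\<And>n. normalized_local_field (K n) (av n)"
    and degree: "\<And>n. ext_degree (K 0) (K n) (m n)"
    and compat: "\<And>n x. x \<in> K 0 \<Longrightarrow> (av n x < 1 \<longleftrightarrow> av 0 x < 1)"
begin

lemma N: "nlf (K n) (av n)" using nlf_of[OF loc] .
lemma ext: "locext (K 0) (av 0) (K n) (av n) (m n)"
proof (rule locext.intro)
  show "nlf (K 0) (av 0)" "nlf (K n) (av n)" by (rule N)+
  show "locext_axioms (K 0) (av 0) (K n) (av n) (m n)"
    unfolding locext_axioms_def using degree[of n] compat[of _ n] by simp
qed

lemma mono: "n \<le> n' \<Longrightarrow> K n \<subseteq> K n'"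
  using lift_Suc_mono_le[of K, OF chain] by blast

lemma restrict0: "x \<in> K 0 \<Longrightarrow> av n x = av 0 x ^ m n"
  using locext.restrict_pow[OF ext] .
lemma m_pos: "m n > 0" using locext.d_pos[OF ext] .

abbreviation "p0 \<equiv> nlf.upi (K 0) (av 0)"
abbreviation "q0 \<equiv> real (residue_card (K 0) (av 0))"

lemma p0: "p0 \<in> K 0" "p0 \<noteq> 0" "av 0 p0 = q0 powi (-1)"
  using nlf.upi[OF N] nlf.upi_nz[OF N] by auto
lemma q0: "q0 > 1" using nlf.q_gt1[OF N] .

lemma av_p0: "av n p0 = (q0 powi (-1)) ^ m n" unfolding restrict0[OF p0(1), of n] p0(3) ..

lemma bound: assumes nn: "n \<le> n'" shows "\<exists>C\<ge>1. \<forall>y\<in>K n. av n y \<le> 1 \<longrightarrow> av n' y \<le> C"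
proof -
  interpret Kn: nlf "K n" "av n" by (rule N)
  interpret Kn': nlf "K n'" "av n'" by (rule N)
  interpret K0: nlf "K 0" "av 0" by (rule N)
  have sub: "K n \<subseteq> K n'" using mono[OF nn] .
  have sub0: "K 0 \<subseteq> K n'" using mono[of 0 n'] by simp
  obtain r :: nat and y where y: "\<forall>i<r. y i \<in> K n" "\<forall>z\<in>K n. av n z \<le> 1 \<longrightarrow>
      (\<exists>A. (\<forall>i<r. A i \<in> K 0 \<and> av 0 (A i) \<le> 1) \<and> z = (\<Sum>i<r. A i * y i))"
    using locext.int_span[OF ext[of n]] by blast
  define C where "C = (\<Sum>i<r. av n' (y i)) + 1"
  have yn': "y i \<in> K n'" if "i < r" for i using y(1) that sub by auto
  have Cge: "av n' (y i) \<le> C" if "i < r" for i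
  proof -
    have "av n' (y i) \<le> (\<Sum>i<r. av n' (y i))"
      using that yn' by (intro member_le_sum) auto
    then show ?thesis unfolding C_def by simp
  qed
  have "0 \<le> (\<Sum>i<r. av n' (y i))" using yn' Kn'.av_nonneg by (intro sum_nonneg) auto
  then have C1: "C \<ge> 1" unfolding C_def by simp
  have "\<forall>z\<in>K n. av n z \<le> 1 \<longrightarrow> av n' z \<le> C"
  proof (intro ballI impI)
    fix z assume z: "z \<in> K n" "av n z \<le> 1"
    then obtain A where A: "\<forall>i<r. A i \<in> K 0 \<and> av 0 (A i) \<le> 1" "z = (\<Sum>i<r. A i * y i)" using y(2) by blast
    have t: "A i * y i \<in> K n' \<and> av n' (A i * y i) \<le> C" if i: "i < r" for i
    proof
      have Ai: "A i \<in> K n'" using A(1) i sub0 by auto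
      show "A i * y i \<in> K n'" using Ai yn'[OF i] by auto
      have "av n' (A i) = av 0 (A i) ^ m n'" using restrict0[of "A i" n'] A(1) i by blast
      also have "\<dots> \<le> 1" using A(1) i K0.av_nonneg by (simp add: power_le_one)
      finally have "av n' (A i) \<le> 1" .
      then have "av n' (A i * y i) \<le> av n' (y i)"
        using Kn'.av_mult[OF Ai yn'[OF i]] Kn'.av_nonneg[OF yn'[OF i]] Kn'.av_nonneg[OF Ai]
          mult_left_le_one_le[of "av n' (y i)" "av n' (A i)"] by simp
      then show "av n' (A i * y i) \<le> C" using Cge[OF i] by simp
    qed
    show "av n' z \<le> C" unfolding A(2) using Kn'.av_sum_le[of "{..<r}" "\<lambda>i. A i * y i" C] t C1 by simp
  qed
  then show ?thesis using C1 by blast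
qed


lemma beta: "0 < q0 powi (-1)" "q0 powi (-1) < 1"
  using q0 by (auto simp: power_int_minus inverse_less_1_iff)

lemma same_unit: assumes nn: "n \<le> n'" and x: "x \<in> K n" shows "av n' x < 1 \<longleftrightarrow> av n x < 1"
proof -
  interpret Kn: nlf "K n" "av n" by (rule N)
  interpret Kn': nlf "K n'" "av n'" by (rule N)
  have sub: "K n \<subseteq> K n'" using mono[OF nn] .
  have x': "x \<in> K n'" using x sub by auto
  have p0n: "p0 \<in> K n" using p0(1) mono[of 0 n] by auto
  obtain C where C: "C \<ge> 1" "\<And>y. y \<in> K n \<Longrightarrow> av n y \<le> 1 \<Longrightarrow> av n' y \<le> C" using bound[OF nn] by blast
  define \<beta> where "\<beta> = q0 powi (-1)"
  have b: "0 < \<beta>" "\<beta> < 1" using beta unfolding \<beta>_def by auto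
  show ?thesis
  proof
    assume b1: "av n' x < 1"
    show "av n x < 1"
    proof (rule ccontr)
      assume "\<not> av n x < 1"
      then have a1: "av n x \<ge> 1" by simp
      then have xnz: "x \<noteq> 0" by auto
      have bpos: "av n' x > 0" using Kn'.av_pos[OF x' xnz] .
      define y where "y = inverse x"
      have yn: "y \<in> K n" unfolding y_def using x by auto
      have "1 < inverse (av n' x)" using bpos b1 by (simp add: one_less_inverse)
      then obtain j where j: "C < inverse (av n' x) ^ j" using real_arch_pow by blast
      have "av n (y ^ j) = inverse (av n x) ^ j" unfolding y_def using Kn.av_power Kn.av_inverse x Kn.inv by simp
      also have "\<dots> \<le> 1" using a1 by (simp add: power_le_one inverse_le_1_iff)
      finally have "av n' (y ^ j) \<le> C" using C(2) yn by auto
      moreover have "av n' (y ^ j) = inverse (av n' x) ^ j" unfolding y_def using Kn'.av_power Kn'.av_inverse x' Kn'.inv by simp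
      ultimately show False using j by simp
    qed
  next
    assume a1: "av n x < 1"
    show "av n' x < 1"
    proof (rule ccontr)
      assume "\<not> av n' x < 1"
      then have b1: "av n' x \<ge> 1" by simp
      then have xnz: "x \<noteq> 0" by auto
      have "\<beta> ^ m n' > 0" using b by simp
      moreover have "\<beta> ^ m n' < 1" using b m_pos[of n'] by (simp add: power_less_one_iff)
      ultimately obtain N where N: "(\<beta> ^ m n') ^ N < inverse C" using real_arch_pow_inv[of "inverse C" "\<beta> ^ m n'"] C(1) by auto
      have "0 < (\<beta> ^ m n) ^ N" using b by simp
      then obtain j where j: "av n x ^ j < (\<beta> ^ m n) ^ N" using real_arch_pow_inv a1 by blast
      define w where "w = x ^ j / p0 ^ N"
      have wn: "w \<in> K n" unfolding w_def using x p0n by auto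
      have avnp: "av n (p0 ^ N) = (\<beta> ^ m n) ^ N" using Kn.av_power[OF p0n] av_p0 \<beta>_def by simp
      have avnp': "av n' (p0 ^ N) = (\<beta> ^ m n') ^ N" using Kn'.av_power[of p0] p0n sub av_p0 \<beta>_def by auto
      have "av n w = av n (x ^ j) / av n (p0 ^ N)" unfolding w_def by (rule Kn.av_divide[OF Kn.power[OF x] Kn.power[OF p0n]])
      also have "\<dots> = av n x ^ j / (\<beta> ^ m n) ^ N" using Kn.av_power[OF x] avnp by simp
      finally have "av n w = av n x ^ j / (\<beta> ^ m n) ^ N" .
      also have "\<dots> \<le> 1" using j \<open>0 < (\<beta> ^ m n) ^ N\<close> by simp
      finally have "av n' w \<le> C" using C(2) wn by simp
      moreover have "av n' w = av n' x ^ j / (\<beta> ^ m n') ^ N"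
      proof -
        have p0n': "p0 \<in> K n'" using p0n sub by auto
        have "av n' w = av n' (x ^ j) / av n' (p0 ^ N)" unfolding w_def by (rule Kn'.av_divide[OF Kn'.power[OF x'] Kn'.power[OF p0n']])
        also have "\<dots> = av n' x ^ j / (\<beta> ^ m n') ^ N" using Kn'.av_power[OF x'] avnp' by simp
        finally show ?thesis .
      qed
      ultimately have "av n' x ^ j \<le> C * (\<beta> ^ m n') ^ N" using b by (simp add: divide_le_eq)
      moreover have "1 \<le> av n' x ^ j" using b1 by (simp add: one_le_power)
      moreover have "C * (\<beta> ^ m n') ^ N < 1" using N C(1) by (simp add: field_simps)
      ultimately show False by simp
    qed
  qed
qed

lemma compat_pow: assumes nn: "n \<le> n'" and x: "x \<in> K n"
  shows "av n' x = av n x powr (real (m n') / real (m n))"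
proof -
  interpret Kn: nlf "K n" "av n" by (rule N)
  interpret Kn': nlf "K n'" "av n'" by (rule N)
  have sub: "K n \<subseteq> K n'" using mono[OF nn] .
  have "\<exists>c>0. \<forall>x\<in>K n. av n' x = av n x powr c"
    using Kn.equiv_abs[OF nonarch_abs_subset[OF Kn'.na sub]] same_unit[OF nn] by blast
  then obtain c where c: "c > 0" "\<And>x. x \<in> K n \<Longrightarrow> av n' x = av n x powr c" by blast
  have p0n: "p0 \<in> K n" using p0(1) mono[of 0 n] by auto
  define \<beta> where "\<beta> = q0 powi (-1)"
  have b: "0 < \<beta>" "\<beta> < 1" using beta unfolding \<beta>_def by auto
  have "\<beta> powr real (m n') = \<beta> powr (real (m n) * c)"
  proof -
    have "\<beta> powr real (m n') = \<beta> ^ m n'" using b by (simp add: powr_realpow)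
    also have "\<dots> = av n' p0" using av_p0 \<beta>_def by simp
    also have "\<dots> = av n p0 powr c" using c(2)[OF p0n] .
    also have "\<dots> = (\<beta> powr real (m n)) powr c" using av_p0 \<beta>_def b by (simp add: powr_realpow)
    also have "\<dots> = \<beta> powr (real (m n) * c)" by (simp add: powr_powr)
    finally show ?thesis .
  qed
  then have "real (m n') = real (m n) * c" using b by (simp add: powr_inj)
  then have "c = real (m n') / real (m n)" using m_pos[of n] by (simp add: field_simps)
  then show ?thesis using c(2)[OF x] by simp
qed


lemma knorm_eq: assumes x: "x \<in> K n" shows "knorm K av m x = av n x powr (1 / real (m n))"
proof -
  define N0 where "N0 = (LEAST n. x \<in> K n)"
  have xN0: "x \<in> K N0" unfolding N0_def using x by (rule LeastI)
  have le: "N0 \<le> n" unfolding N0_def using x by (rule Least_le)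
  have "knorm K av m x = av N0 x powr (1 / real (m N0))" unfolding knorm_def N0_def Let_def ..
  also have "\<dots> = (av N0 x powr (real (m n) / real (m N0))) powr (1 / real (m n))"
    using m_pos[of n] by (simp add: powr_powr)
  also have "av N0 x powr (real (m n) / real (m N0)) = av n x" using compat_pow[OF le xN0] by simp
  finally show ?thesis .
qed

lemma common: "\<exists>n. x \<in> K n \<and> y \<in> K n"
proof -
  obtain a b where "x \<in> K a" "y \<in> K b" using union by blast
  then have "x \<in> K (max a b)" "y \<in> K (max a b)" using mono[of a "max a b"] mono[of b "max a b"] by auto
  then show ?thesis by blast
qed

lemma knorm_nonneg: "0 \<le> knorm K av m x"
proof -
  obtain n where "x \<in> K n" using union by blast
  then show ?thesis using knorm_eq by simp
qed

lemma knorm_zero: "knorm K av m 0 = 0"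
proof -
  have "(0::'a) \<in> K 0" using nafield.zero nlf.axioms(1)[OF N] by blast
  then show ?thesis using knorm_eq[of 0 0] nafield.av_zero[OF nlf.axioms(1)[OF N]] by simp
qed

lemma knorm_uminus: "knorm K av m (- x) = knorm K av m x"
proof -
  obtain n where x: "x \<in> K n" using union by blast
  interpret Kn: nlf "K n" "av n" by (rule N)
  have "- x \<in> K n" using x by auto
  then show ?thesis using knorm_eq[OF x] knorm_eq[of "- x" n] Kn.av_uminus[OF x] by simp
qed

lemma knorm_add: "knorm K av m (x + y) \<le> max (knorm K av m x) (knorm K av m y)"
proof -
  obtain n where xy: "x \<in> K n" "y \<in> K n" using common by blast
  interpret Kn: nlf "K n" "av n" by (rule N)
  have s: "x + y \<in> K n" using xy by auto
  define e where "e = 1 / real (m n)"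
  have e0: "0 \<le> e" unfolding e_def by simp
  have "av n (x + y) \<le> max (av n x) (av n y)" using Kn.av_add xy by simp
  then have "av n (x + y) powr e \<le> max (av n x) (av n y) powr e" using e0 Kn.av_nonneg s by (intro powr_mono2) auto
  also have "\<dots> \<le> max (av n x powr e) (av n y powr e)" by (simp add: max_def)
  finally show ?thesis using knorm_eq[OF s] knorm_eq[OF xy(1)] knorm_eq[OF xy(2)] e_def by simp
qed


lemma pos_def: assumes alpha: "\<alpha> > 0" and tpos: "t > 0"
  shows "positive_definite (\<lambda>\<xi>. complex_of_real (rho \<alpha> (knorm K av m \<xi>) t))"
  unfolding positive_definite_def Let_def
proof (intro allI)
  fix n :: nat and \<xi> :: "nat \<Rightarrow> 'a" and c :: "nat \<Rightarrow> complex"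
  define f where "f i j = rho \<alpha> (knorm K av m (\<xi> i - \<xi> j)) t" for i j
  have "\<exists>r\<ge>0. (\<Sum>i<n. \<Sum>j<n. c i * cnj (c j) * complex_of_real (f i j)) = complex_of_real r"
  proof (rule ultra_psd)
    show "0 \<le> f i j" for i j unfolding f_def by (rule rho_nonneg)
    show "f i j = f j i" for i j
    proof -
      have "\<xi> j - \<xi> i = - (\<xi> i - \<xi> j)" by simp
      then show ?thesis unfolding f_def using knorm_uminus[of "\<xi> i - \<xi> j"] by simp
    qed
    show "min (f i j) (f j l) \<le> f i l" for i j l
    proof -
      have "knorm K av m (\<xi> i - \<xi> l) \<le> max (knorm K av m (\<xi> i - \<xi> j)) (knorm K av m (\<xi> j - \<xi> l))"
        using knorm_add[of "\<xi> i - \<xi> j" "\<xi> j - \<xi> l"] by simp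
      then have "knorm K av m (\<xi> i - \<xi> l) \<le> knorm K av m (\<xi> i - \<xi> j) \<or>
                 knorm K av m (\<xi> i - \<xi> l) \<le> knorm K av m (\<xi> j - \<xi> l)" by (simp add: le_max_iff_disj)
      then have "f i j \<le> f i l \<or> f j l \<le> f i l" unfolding f_def using rho_antimono[OF alpha tpos] by blast
      then show ?thesis by (simp add: min_le_iff_disj)
    qed
  qed
  then obtain r where r: "r \<ge> 0" "(\<Sum>i<n. \<Sum>j<n. c i * cnj (c j) * complex_of_real (f i j)) = complex_of_real r" by blast
  show "Im (\<Sum>i<n. \<Sum>j<n. c i * cnj (c j) * complex_of_real (rho \<alpha> (knorm K av m (\<xi> i - \<xi> j)) t)) = 0 \<and>
        0 \<le> Re (\<Sum>i<n. \<Sum>j<n. c i * cnj (c j) * complex_of_real (rho \<alpha> (knorm K av m (\<xi> i - \<xi> j)) t))"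
    using r unfolding f_def by simp
qed

lemma ind_open: "openin (ind_lim_topology K av) U \<longleftrightarrow> (\<forall>n. \<forall>x\<in>U \<inter> K n. \<exists>e>0. \<forall>y\<in>K n. av n (y - x) < e \<longrightarrow> y \<in> U)"
proof -
  define P where "P U = (\<forall>n. \<forall>x\<in>U \<inter> K n. \<exists>e>0. \<forall>y\<in>K n. av n (y - x) < e \<longrightarrow> y \<in> U)" for U
  have "istopology P" unfolding istopology_def
  proof (intro conjI allI impI)
    fix S T assume ST: "P S" "P T"
    show "P (S \<inter> T)" unfolding P_def
    proof (intro allI ballI)
      fix n x assume x: "x \<in> S \<inter> T \<inter> K n"
      obtain e1 where e1: "e1 > 0" "\<forall>y\<in>K n. av n (y - x) < e1 \<longrightarrow> y \<in> S" using ST(1) x unfolding P_def by blast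
      obtain e2 where e2: "e2 > 0" "\<forall>y\<in>K n. av n (y - x) < e2 \<longrightarrow> y \<in> T" using ST(2) x unfolding P_def by blast
      show "\<exists>e>0. \<forall>y\<in>K n. av n (y - x) < e \<longrightarrow> y \<in> S \<inter> T"
        using e1 e2 by (intro exI[of _ "min e1 e2"]) auto
    qed
  next
    fix \<K> assume h: "\<forall>K\<in>\<K>. P K"
    show "P (\<Union>\<K>)" unfolding P_def
    proof (intro allI ballI)
      fix n x assume x: "x \<in> \<Union>\<K> \<inter> K n"
      then obtain S where S: "S \<in> \<K>" "x \<in> S" by blast
      obtain e where e: "e > 0" "\<forall>y\<in>K n. av n (y - x) < e \<longrightarrow> y \<in> S" using h S x unfolding P_def by blast
      show "\<exists>e>0. \<forall>y\<in>K n. av n (y - x) < e \<longrightarrow> y \<in> \<Union>\<K>" using e S by blast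
    qed
  qed
  then have "openin (topology P) = P" by (rule topology_inverse')
  moreover have "ind_lim_topology K av = topology P" unfolding ind_lim_topology_def P_def ..
  ultimately show ?thesis unfolding P_def by simp
qed

lemma loc_const_cont:
  assumes lc: "\<And>n x. x \<in> K n \<Longrightarrow> \<exists>e>0. \<forall>y\<in>K n. av n (y - x) < e \<longrightarrow> f y = f x"
  shows "continuous_map (ind_lim_topology K av) euclidean f"
proof -
  have UNIVo: "openin (ind_lim_topology K av) UNIV" unfolding ind_open by (auto intro: exI[of _ 1])
  then have top: "topspace (ind_lim_topology K av) = UNIV" by (metis openin_subset top.extremum_unique)
  show ?thesis unfolding continuous_map_def
  proof (intro conjI allI impI)
    show "f \<in> topspace (ind_lim_topology K av) \<rightarrow> topspace euclidean" by simp
    fix U :: "'b set" assume "openin euclidean U"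
    show "openin (ind_lim_topology K av) {x \<in> topspace (ind_lim_topology K av). f x \<in> U}"
      unfolding ind_open top
    proof (intro allI ballI)
      fix n x assume x: "x \<in> {x \<in> UNIV. f x \<in> U} \<inter> K n"
      obtain e where e: "e > 0" "\<forall>y\<in>K n. av n (y - x) < e \<longrightarrow> f y = f x" using lc x by blast
      show "\<exists>e>0. \<forall>y\<in>K n. av n (y - x) < e \<longrightarrow> y \<in> {x \<in> UNIV. f x \<in> U}" using e x by auto
    qed
  qed
qed

lemma cont: "continuous_map (ind_lim_topology K av) euclidean (\<lambda>\<xi>. complex_of_real (rho \<alpha> (knorm K av m \<xi>) t))"
proof (rule loc_const_cont)
  fix n x assume x: "x \<in> K n"
  interpret Kn: nlf "K n" "av n" by (rule N)
  show "\<exists>e>0. \<forall>y\<in>K n. av n (y - x) < e \<longrightarrow>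
        complex_of_real (rho \<alpha> (knorm K av m y) t) = complex_of_real (rho \<alpha> (knorm K av m x) t)"
  proof (cases "x = 0")
    case True
    have "rho \<alpha> (knorm K av m y) t = rho \<alpha> (knorm K av m x) t" if y: "y \<in> K n" "av n (y - x) < 1" for y
    proof -
      have "av n y < 1" using y True by simp
      then have "av n y powr (1 / real (m n)) \<le> 1" using Kn.av_nonneg[OF y(1)] by (intro powr_le1) auto
      then have "knorm K av m y \<le> 1" using knorm_eq[OF y(1)] by simp
      moreover have "knorm K av m x \<le> 1" using True knorm_zero by simp
      ultimately show ?thesis unfolding rho_def by simp
    qed
    then show ?thesis by (intro exI[of _ 1]) auto
  next
    case False
    have "knorm K av m y = knorm K av m x" if y: "y \<in> K n" "av n (y - x) < av n x" for y
    proof -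
      have "av n (x + (y - x)) = av n x" using Kn.av_strict[OF x _ y(2)] y(1) x by auto
      then have "av n y = av n x" by simp
      then show ?thesis using knorm_eq[OF x] knorm_eq[OF y(1)] by simp
    qed
    moreover have "av n x > 0" using Kn.av_pos[OF x False] .
    ultimately show ?thesis by (intro exI[of _ "av n x"]) auto
  qed
qed

end

theorem proposition8:
  fixes K :: "nat \<Rightarrow> 'a::field_char_0 set"
    and av :: "nat \<Rightarrow> 'a \<Rightarrow> real"
    and m :: "nat \<Rightarrow> nat"
    and \<alpha> t :: real
  assumes chain: "\<And>n. K n \<subseteq> K (Suc n)"
    and union: "(\<Union>n. K n) = UNIV"
    and local: "\<And>n. normalized_local_field (K n) (av n)"
    and degree: "\<And>n. ext_degree (K 0) (K n) (m n)"
    and compat: "\<And>n x. x \<in> K 0 \<Longrightarrow> (av n x < 1 \<longleftrightarrow> av 0 x < 1)"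
    and alpha: "\<alpha> > 0"
    and tpos: "t > 0"
  shows "continuous_map (ind_lim_topology K av) euclidean
           (\<lambda>\<xi>. complex_of_real (rho \<alpha> (knorm K av m \<xi>) t))
       \<and> positive_definite (\<lambda>\<xi>. complex_of_real (rho \<alpha> (knorm K av m \<xi>) t))"
proof -
  interpret T: tower K av m using chain union local degree compat by unfold_locales
  show ?thesis using T.cont T.pos_def[OF alpha tpos] by simp
qed

end
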